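(* Let $\mathcal{X}\subseteq\mathbb{R}^d$ be compact, $c\ge2$, and $\{(\mathbf{x}_i,y_i)\}_{i=1}^n$ i.i.d. labeled data with $y_i\in\{1,\dots,c\}$. Let $S\colon\mathcal{X}\times\mathcal{X}\to[0,1]$ be symmetric continuous, and assume the eigenvalues $\lambda_k$ and orthonormal eigenfunctions $\phi_k$ of $(L_Sf)(\mathbf{x})=\int S(\mathbf{x},\mathbf{t})f(\mathbf{t})\,d\mathbf{t}$ satisfy $\sum_k\lambda_k|\phi_k(\mathbf{x})|^2<C$ for all $\mathbf{x}$, for some $C>0$; let $S^+=\sum_{k:\lambda_k\ge0}\lambda_k\phi_k\otimes\phi_k$ and $S^-=\sum_{k:\lambda_k<0}|\lambda_k|\phi_k\otimes\phi_k$. Let $B^+,B^-,R>0$ with $\sup_{\mathbf{x}\in\mathcal{X}}|S^+(\mathbf{x},\mathbf{x})|\le R^2$ and $\sup_{\mathbf{x}\in\mathcal{X}}|S^-(\mathbf{x},\mathbf{x})|\le R^2$, and let $\mathcal{H}_S$ be the class of margin functions defined below. Then for $\delta\in(0,1)$, with probability at least $1-\delta$ over the data $\{\mathbf{x}_i\}_{i=1}^n$, $$\mathfrak{R}(\mathcal{H}_S)\le\frac{R(2c-1)c(B^++B^-)}{\sqrt n}+2c(2c-1)(B^++B^-)R^2\sqrt{\frac{\ln(2/\delta)}{2n}}.$$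
   Context: $\boldsymbol{\alpha}^{(y)}$ has entries $\alpha_i$ if $y_i=y$ and $0$ otherwise; $[\mathbf{S}^\pm]_{ij}=S^\pm(\mathbf{x}_i,\mathbf{x}_j)$; $\Omega^\pm(\boldsymbol{\alpha})=\sum_{y=1}^c{\boldsymbol{\alpha}^{(y)}}^\top\mathbf{S}^\pm\boldsymbol{\alpha}^{(y)}$. For $1\le y\le c$, $\mathcal{H}_{S,y}=\{\mathbf{x}\mapsto\sum_{i:y_i=y}\alpha_iS(\mathbf{x},\mathbf{x}_i):\boldsymbol{\alpha}\ge0,\mathbf{1}^\top\boldsymbol{\alpha}=1,\Omega^+(\boldsymbol{\alpha})\le(B^+)^2,\Omega^-(\boldsymbol{\alpha})\le(B^-)^2\}$, and $\mathcal{H}_S$ is the class of margin functions $m_{h_S}(\mathbf{x},y)=h_S(\mathbf{x},y)-\max_{y'\neq y}h_S(\mathbf{x},y')$ with $h_S(\cdot,y)\in\mathcal{H}_{S,y}$. The Rademacher complexity of a class $\mathcal{A}$ is $\mathfrak{R}(\mathcal{A})=\mathbb{E}_{\{\sigma_i\},\{\mathbf{x}_i\}}\big[\sup_{h\in\mathcal{A}}\big|\frac1n\sum_{i=1}^n\sigma_ih(\mathbf{x}_i)\big|\big]$ with $\sigma_i$ i.i.d. uniform on $\{-1,1\}$ (for $\mathcal{H}_S$, $h(\mathbf{x}_i)$ means $m_{h_S}(\mathbf{x}_i,y_i)$). *)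

theory Defs
  imports "HOL-Probability.Probability"
begin

definition Splus :: "(nat \<Rightarrow> real) \<Rightarrow> (nat \<Rightarrow> 'a \<Rightarrow> real) \<Rightarrow> nat set \<Rightarrow> 'a \<Rightarrow> 'a \<Rightarrow> real" where
  "Splus lam phi I x t = (\<Sum>\<^sub>\<infinity>k\<in>{k\<in>I. lam k \<ge> 0}. lam k * phi k x * phi k t)"

definition Sminus :: "(nat \<Rightarrow> real) \<Rightarrow> (nat \<Rightarrow> 'a \<Rightarrow> real) \<Rightarrow> nat set \<Rightarrow> 'a \<Rightarrow> 'a \<Rightarrow> real" where
  "Sminus lam phi I x t = (\<Sum>\<^sub>\<infinity>k\<in>{k\<in>I. lam k < 0}. \<bar>lam k\<bar> * phi k x * phi k t)"

text \<open>A labeled sample of size n is D :: nat => 'a * nat, with x_i = fst (D i), y_i = snd (D i), i < n.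
  Omega K c n D alpha = sum_{y=1..c} alpha^(y)^T K alpha^(y).\<close>

definition Omega :: "('a \<Rightarrow> 'a \<Rightarrow> real) \<Rightarrow> nat \<Rightarrow> nat \<Rightarrow> (nat \<Rightarrow> 'a \<times> nat) \<Rightarrow> (nat \<Rightarrow> real) \<Rightarrow> real" where
  "Omega K c n D \<alpha> =
     (\<Sum>y=1..c. \<Sum>i<n. \<Sum>j<n.
        (if snd (D i) = y then \<alpha> i else 0) * K (fst (D i)) (fst (D j)) *
        (if snd (D j) = y then \<alpha> j else 0))"

definition HSy :: "('a \<Rightarrow> 'a \<Rightarrow> real) \<Rightarrow> ('a \<Rightarrow> 'a \<Rightarrow> real) \<Rightarrow> ('a \<Rightarrow> 'a \<Rightarrow> real)
    \<Rightarrow> real \<Rightarrow> real \<Rightarrow> nat \<Rightarrow> nat \<Rightarrow> (nat \<Rightarrow> 'a \<times> nat) \<Rightarrow> nat \<Rightarrow> ('a \<Rightarrow> real) set" where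
  "HSy S Sp Sm Bp Bm c n D y =
     {(\<lambda>x. \<Sum>i\<in>{i. i < n \<and> snd (D i) = y}. \<alpha> i * S x (fst (D i))) | \<alpha>.
        (\<forall>i<n. 0 \<le> \<alpha> i) \<and> (\<Sum>i<n. \<alpha> i) = 1 \<and>
        Omega Sp c n D \<alpha> \<le> Bp\<^sup>2 \<and> Omega Sm c n D \<alpha> \<le> Bm\<^sup>2}"

definition margin :: "nat \<Rightarrow> ('a \<Rightarrow> nat \<Rightarrow> real) \<Rightarrow> 'a \<Rightarrow> nat \<Rightarrow> real" where
  "margin c h x y = h x y - Max {h x y' | y'. y' \<in> {1..c} \<and> y' \<noteq> y}"

definition HS :: "('a \<Rightarrow> 'a \<Rightarrow> real) \<Rightarrow> ('a \<Rightarrow> 'a \<Rightarrow> real) \<Rightarrow> ('a \<Rightarrow> 'a \<Rightarrow> real)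
    \<Rightarrow> real \<Rightarrow> real \<Rightarrow> nat \<Rightarrow> nat \<Rightarrow> (nat \<Rightarrow> 'a \<times> nat) \<Rightarrow> ('a \<Rightarrow> nat \<Rightarrow> real) set" where
  "HS S Sp Sm Bp Bm c n D =
     {margin c h | h. \<forall>y\<in>{1..c}. (\<lambda>x. h x y) \<in> HSy S Sp Sm Bp Bm c n D y}"

text \<open>Empirical part: E_sigma [ sup_{f in F} | 1/n sum_i sigma_i f(x_i,y_i) | ],
  with the convention sup of the empty set = 0.\<close>

definition emp_rad :: "('a \<Rightarrow> nat \<Rightarrow> real) set \<Rightarrow> nat \<Rightarrow> (nat \<Rightarrow> 'a \<times> nat) \<Rightarrow> real" where
  "emp_rad F n D =
     (\<Sum>\<sigma>\<in>({..<n} \<rightarrow>\<^sub>E {-1, 1::real}).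
        (let A = {\<bar>(1 / real n) * (\<Sum>i<n. \<sigma> i * f (fst (D i)) (snd (D i)))\<bar> | f. f \<in> F}
         in if A = {} then 0 else Sup A)) / 2 ^ n"

definition rademacher :: "('a \<times> nat) measure \<Rightarrow> nat \<Rightarrow> ((nat \<Rightarrow> 'a \<times> nat) \<Rightarrow> ('a \<Rightarrow> nat \<Rightarrow> real) set) \<Rightarrow> ennreal" where
  "rademacher P n FD = (\<integral>\<^sup>+ D. ennreal (emp_rad (FD D) n D) \<partial>(PiM {..<n} (\<lambda>_. P)))"

end

theory Submission
  imports Defs
begin


definition radT :: "nat \<Rightarrow> 't set \<Rightarrow> ('t \<Rightarrow> nat \<Rightarrow> real) \<Rightarrow> real" where
  "radT n T F = (\<Sum>\<sigma>\<in>({..<n} \<rightarrow>\<^sub>E {-1, 1::real}). (SUP t\<in>T. \<Sum>i<n. \<sigma> i * F t i))"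

definition bnd :: "nat \<Rightarrow> 't set \<Rightarrow> ('t \<Rightarrow> nat \<Rightarrow> real) \<Rightarrow> bool" where
  "bnd n T F = (\<exists>M. \<forall>t\<in>T. \<forall>i<n. \<bar>F t i\<bar> \<le> M)"

lemma sig_val: "\<sigma> \<in> {..<n} \<rightarrow>\<^sub>E {-1, 1::real} \<Longrightarrow> i < n \<Longrightarrow> \<sigma> i = -1 \<or> \<sigma> i = 1"
  using PiE_mem[of \<sigma> "{..<n}" "\<lambda>_. {-1, 1::real}" i] by auto

lemma sig_abs: "\<sigma> \<in> {..<n} \<rightarrow>\<^sub>E {-1, 1::real} \<Longrightarrow> i < n \<Longrightarrow> \<bar>\<sigma> i\<bar> \<le> 1"
  using sig_val[of \<sigma> n i] by auto

lemma bnd_bdd: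
  assumes "bnd n T F" "\<sigma> \<in> {..<n} \<rightarrow>\<^sub>E {-1, 1::real}"
  shows "bdd_above ((\<lambda>t. \<Sum>i<n. \<sigma> i * F t i) ` T)"
proof -
  obtain M where M: "\<forall>t\<in>T. \<forall>i<n. \<bar>F t i\<bar> \<le> M" using assms(1) unfolding bnd_def by blast
  have B: "(\<Sum>i<n. \<sigma> i * F t i) \<le> real n * M" if "t \<in> T" for t
  proof -
    have "(\<Sum>i<n. \<sigma> i * F t i) \<le> (\<Sum>i<n. M)"
    proof (rule sum_mono)
      fix i assume "i \<in> {..<n}"
      then have "\<bar>F t i\<bar> \<le> M" using M that by simp
      moreover have "\<bar>\<sigma> i\<bar> \<le> 1" using sig_abs[OF assms(2)] \<open>i \<in> {..<n}\<close> by simp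
      ultimately have "\<bar>\<sigma> i\<bar> * \<bar>F t i\<bar> \<le> 1 * M"
        by (intro mult_mono) auto
      then have "\<bar>\<sigma> i * F t i\<bar> \<le> M" by (simp add: abs_mult)
      then show "\<sigma> i * F t i \<le> M" by linarith
    qed
    then show ?thesis by simp
  qed
  show ?thesis by (rule bdd_aboveI2[OF B])
qed

lemma radT_cong:
  assumes "\<And>t i. t \<in> T \<Longrightarrow> i < n \<Longrightarrow> F t i = G t i"
  shows "radT n T F = radT n T G"
  unfolding radT_def
  by (rule sum.cong[OF refl], rule SUP_cong[OF refl], rule sum.cong[OF refl]) (simp add: assms)

lemma radT_mono_pointwise:
  assumes "T \<noteq> {}" "\<And>\<sigma> t. \<sigma> \<in> {..<n} \<rightarrow>\<^sub>E {-1, 1::real} \<Longrightarrow> t \<in> T \<Longrightarrow> (\<Sum>i<n. \<sigma> i * F t i) \<le> B \<sigma>"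
  shows "radT n T F \<le> (\<Sum>\<sigma>\<in>({..<n} \<rightarrow>\<^sub>E {-1, 1::real}). B \<sigma>)"
  unfolding radT_def by (intro sum_mono cSUP_least assms) auto

lemma radT_subadd:
  assumes "T \<noteq> {}" "bnd n T F" "bnd n T G"
  shows "radT n T (\<lambda>t i. F t i + G t i) \<le> radT n T F + radT n T G"
  unfolding radT_def sum.distrib[symmetric]
proof (rule sum_mono)
  fix \<sigma> assume s: "\<sigma> \<in> {..<n} \<rightarrow>\<^sub>E {-1, 1::real}"
  show "(SUP t\<in>T. \<Sum>i<n. \<sigma> i * (F t i + G t i)) \<le> (SUP t\<in>T. \<Sum>i<n. \<sigma> i * F t i) + (SUP t\<in>T. \<Sum>i<n. \<sigma> i * G t i)"
  proof (rule cSUP_least[OF assms(1)])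
    fix t assume t: "t \<in> T"
    have "(\<Sum>i<n. \<sigma> i * (F t i + G t i)) = (\<Sum>i<n. \<sigma> i * F t i) + (\<Sum>i<n. \<sigma> i * G t i)"
      by (simp add: algebra_simps sum.distrib)
    also have "\<dots> \<le> (SUP t\<in>T. \<Sum>i<n. \<sigma> i * F t i) + (SUP t\<in>T. \<Sum>i<n. \<sigma> i * G t i)"
      by (intro add_mono cSUP_upper t bnd_bdd[OF assms(2) s] bnd_bdd[OF assms(3) s])
    finally show "(\<Sum>i<n. \<sigma> i * (F t i + G t i)) \<le> \<dots>" .
  qed
qed

lemma radT_scale2:
  assumes "T \<noteq> {}" "bnd n T F"
  shows "2 * radT n T F \<le> radT n T (\<lambda>t i. 2 * F t i)"
  unfolding radT_def sum_distrib_left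
proof (rule sum_mono)
  fix \<sigma> assume s: "\<sigma> \<in> {..<n} \<rightarrow>\<^sub>E {-1, 1::real}"
  have b2: "bnd n T (\<lambda>t i. 2 * F t i)"
  proof -
    obtain M where M: "\<forall>t\<in>T. \<forall>i<n. \<bar>F t i\<bar> \<le> M" using assms(2) unfolding bnd_def by blast
    then show ?thesis unfolding bnd_def by (intro exI[of _ "2*M"]) (auto simp: abs_mult)
  qed
  have "(SUP t\<in>T. \<Sum>i<n. \<sigma> i * F t i) \<le> (SUP t\<in>T. \<Sum>i<n. \<sigma> i * (2 * F t i)) / 2"
  proof (rule cSUP_least[OF assms(1)])
    fix t assume t: "t \<in> T"
    have "(\<Sum>i<n. \<sigma> i * (2 * F t i)) \<le> (SUP t\<in>T. \<Sum>i<n. \<sigma> i * (2 * F t i))"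
      by (intro cSUP_upper t bnd_bdd[OF b2 s])
    moreover have "(\<Sum>i<n. \<sigma> i * (2 * F t i)) = 2 * (\<Sum>i<n. \<sigma> i * F t i)"
      by (simp add: sum_distrib_left algebra_simps)
    ultimately show "(\<Sum>i<n. \<sigma> i * F t i) \<le> (SUP t\<in>T. \<Sum>i<n. \<sigma> i * (2 * F t i)) / 2" by simp
  qed
  then show "2 * (SUP t\<in>T. \<Sum>i<n. \<sigma> i * F t i) \<le> (SUP t\<in>T. \<Sum>i<n. \<sigma> i * (2 * F t i))" by simp
qed

definition negs :: "nat \<Rightarrow> (nat \<Rightarrow> real) \<Rightarrow> nat \<Rightarrow> real" where
  "negs n \<sigma> = (\<lambda>i. if i < n then - \<sigma> i else undefined)"

lemma negs_bij: "bij_betw (negs n) ({..<n} \<rightarrow>\<^sub>E {-1, 1::real}) ({..<n} \<rightarrow>\<^sub>E {-1, 1::real})"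
proof (rule bij_betw_byWitness[where f' = "negs n"])
  show "\<forall>a\<in>{..<n} \<rightarrow>\<^sub>E {- 1, 1}. negs n (negs n a) = a"
  proof
    fix a assume a: "a \<in> {..<n} \<rightarrow>\<^sub>E {- 1, 1::real}"
    show "negs n (negs n a) = a"
    proof
      fix i show "negs n (negs n a) i = a i"
        using PiE_arb[OF a, of i] by (cases "i < n") (simp_all add: negs_def)
    qed
  qed
  then show "\<forall>a'\<in>{..<n} \<rightarrow>\<^sub>E {- 1, 1}. negs n (negs n a') = a'" .
  show "negs n ` ({..<n} \<rightarrow>\<^sub>E {- 1, 1}) \<subseteq> {..<n} \<rightarrow>\<^sub>E {- 1, 1}"
  proof (rule image_subsetI)
    fix \<sigma> :: "nat \<Rightarrow> real" assume s: "\<sigma> \<in> {..<n} \<rightarrow>\<^sub>E {- 1, 1}"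
    show "negs n \<sigma> \<in> {..<n} \<rightarrow>\<^sub>E {- 1, 1}"
    proof (rule PiE_I)
      fix x assume "x \<in> {..<n}"
      then show "negs n \<sigma> x \<in> {- 1, 1}" using sig_val[OF s, of x] by (auto simp: negs_def)
    next
      fix x assume "x \<notin> {..<n}"
      then show "negs n \<sigma> x = undefined" by (simp add: negs_def)
    qed
  qed
  then show "negs n ` ({..<n} \<rightarrow>\<^sub>E {- 1, 1}) \<subseteq> {..<n} \<rightarrow>\<^sub>E {- 1, 1}" .
qed

lemma sum_negs:
  "(\<Sum>\<sigma>\<in>({..<n} \<rightarrow>\<^sub>E {-1, 1::real}). H \<sigma>) = (\<Sum>\<sigma>\<in>({..<n} \<rightarrow>\<^sub>E {-1, 1::real}). H (negs n \<sigma>))"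
  using sum.reindex_bij_betw[OF negs_bij, of H n] by argo

lemma radT_neg: "radT n T (\<lambda>t i. - F t i) = radT n T F"
proof -
  have "radT n T F = (\<Sum>\<sigma>\<in>({..<n} \<rightarrow>\<^sub>E {-1, 1::real}). (SUP t\<in>T. \<Sum>i<n. negs n \<sigma> i * F t i))"
    unfolding radT_def by (rule sum_negs)
  also have "\<dots> = radT n T (\<lambda>t i. - F t i)"
    unfolding radT_def negs_def
    by (rule sum.cong[OF refl], rule SUP_cong[OF refl], rule sum.cong[OF refl]) simp
  finally show ?thesis by simp
qed


lemma bndI: "(\<And>t i. t \<in> T \<Longrightarrow> i < n \<Longrightarrow> \<bar>F t i\<bar> \<le> M) \<Longrightarrow> bnd n T F"
  unfolding bnd_def by (rule exI[of _ M]) simp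

lemma bndE:
  assumes "bnd n T F"
  obtains M where "\<And>t i. t \<in> T \<Longrightarrow> i < n \<Longrightarrow> \<bar>F t i\<bar> \<le> M"
proof -
  from assms obtain M where M: "\<forall>t\<in>T. \<forall>i<n. \<bar>F t i\<bar> \<le> M" unfolding bnd_def by (elim exE)
  show ?thesis
  proof (rule that)
    fix t i assume "t \<in> T" "i < n"
    then show "\<bar>F t i\<bar> \<le> M" using M by simp
  qed
qed

lemma upd_sig:
  assumes "\<sigma> \<in> {..<n} \<rightarrow>\<^sub>E {-1, 1::real}" "m < n" "v \<in> {-1, 1}"
  shows "\<sigma>(m := v) \<in> {..<n} \<rightarrow>\<^sub>E {-1, 1::real}"
proof (rule PiE_I)
  fix x assume x: "x \<in> {..<n}"
  show "(\<sigma>(m := v)) x \<in> {- 1, 1}"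
  proof (cases "x = m")
    case True then show ?thesis using assms(3) by simp
  next
    case False then show ?thesis using PiE_mem[OF assms(1) x] by simp
  qed
next
  fix x assume x: "x \<notin> {..<n}"
  then have "x \<noteq> m" using assms(2) by auto
  then show "(\<sigma>(m := v)) x = undefined" using PiE_arb[OF assms(1) x] by simp
qed

lemma sum_sig_split:
  fixes m n :: nat
  assumes "m < n"
  shows "(\<Sum>\<sigma>\<in>({..<n} \<rightarrow>\<^sub>E {-1, 1::real}). H \<sigma>)
       = (\<Sum>\<sigma>\<in>{\<sigma>\<in>({..<n} \<rightarrow>\<^sub>E {-1, 1::real}). \<sigma> m = 1}. H \<sigma> + H (\<sigma>(m := -1)))"
proof -
  define S where "S = ({..<n} \<rightarrow>\<^sub>E {-1, 1::real})"
  define A1 where "A1 = {\<sigma>\<in>S. \<sigma> m = 1}"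
  define A2 where "A2 = {\<sigma>\<in>S. \<sigma> m = -1}"
  have fin: "finite S" unfolding S_def by (simp add: finite_PiE)
  have SU: "S = A1 \<union> A2"
  proof
    show "S \<subseteq> A1 \<union> A2"
    proof
      fix \<sigma> assume "\<sigma> \<in> S"
      then show "\<sigma> \<in> A1 \<union> A2" using sig_val[of \<sigma> n m] assms unfolding A1_def A2_def S_def by auto
    qed
    show "A1 \<union> A2 \<subseteq> S" unfolding A1_def A2_def by auto
  qed
  have dis: "A1 \<inter> A2 = {}" unfolding A1_def A2_def by auto
  have f1: "finite A1" "finite A2" using fin SU by (auto intro: finite_subset)
  have img: "A2 = (\<lambda>\<sigma>. \<sigma>(m := -1)) ` A1"
  proof
    show "(\<lambda>\<sigma>. \<sigma>(m := -1)) ` A1 \<subseteq> A2"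
    proof (rule image_subsetI)
      fix \<sigma> assume "\<sigma> \<in> A1"
      then have "\<sigma> \<in> S" unfolding A1_def by simp
      then have "\<sigma>(m := -1) \<in> S" unfolding S_def using upd_sig[of \<sigma> n m "-1"] assms by simp
      then show "\<sigma>(m := -1) \<in> A2" unfolding A2_def by simp
    qed
    show "A2 \<subseteq> (\<lambda>\<sigma>. \<sigma>(m := -1)) ` A1"
    proof
      fix \<tau> assume t: "\<tau> \<in> A2"
      then have tS: "\<tau> \<in> S" and tm: "\<tau> m = -1" unfolding A2_def by simp_all
      have "\<tau>(m := 1) \<in> S" using tS unfolding S_def using upd_sig[of \<tau> n m 1] assms by simp
      then have "\<tau>(m := 1) \<in> A1" unfolding A1_def by simp
      then show "\<tau> \<in> (\<lambda>\<sigma>. \<sigma>(m := -1)) ` A1"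
        by (rule rev_image_eqI) (use tm in \<open>simp add: fun_eq_iff\<close>)
    qed
  qed
  have inj: "inj_on (\<lambda>\<sigma>. \<sigma>(m := -1)) A1"
  proof (rule inj_onI)
    fix \<sigma> \<tau> assume a: "\<sigma> \<in> A1" "\<tau> \<in> A1" "\<sigma>(m := -1) = \<tau>(m := -1)"
    show "\<sigma> = \<tau>"
    proof
      fix x show "\<sigma> x = \<tau> x"
      proof (cases "x = m")
        case True then show ?thesis using a(1,2) unfolding A1_def by simp
      next
        case False then show ?thesis using fun_cong[OF a(3), of x] by simp
      qed
    qed
  qed
  have "sum H S = sum H A1 + sum H A2" unfolding SU by (rule sum.union_disjoint[OF f1 dis])
  also have "sum H A2 = (\<Sum>\<sigma>\<in>A1. H (\<sigma>(m := -1)))"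
    unfolding img by (subst sum.reindex[OF inj]) simp
  finally show ?thesis unfolding S_def[symmetric] A1_def[symmetric] by (simp add: sum.distrib)
qed

lemma pair_sup:
  fixes p a :: "'t \<Rightarrow> real"
  assumes T: "T \<noteq> {}" and b1: "bdd_above ((\<lambda>t. p t + a t) ` T)" and b2: "bdd_above ((\<lambda>t. p t - a t) ` T)"
    and L: "\<And>x y. \<bar>\<phi> x - \<phi> y\<bar> \<le> \<bar>x - y\<bar>"
  shows "(SUP t\<in>T. p t + \<phi> (a t)) + (SUP t\<in>T. p t - \<phi> (a t)) \<le> (SUP t\<in>T. p t + a t) + (SUP t\<in>T. p t - a t)"
proof -
  define R where "R = (SUP t\<in>T. p t + a t) + (SUP t\<in>T. p t - a t)"
  have key: "p t + \<phi> (a t) + (p s - \<phi> (a s)) \<le> R" if t: "t \<in> T" and s: "s \<in> T" for t s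
  proof -
    have u1: "p t + a t \<le> (SUP t\<in>T. p t + a t)" "p s + a s \<le> (SUP t\<in>T. p t + a t)"
      using cSUP_upper[OF t b1] cSUP_upper[OF s b1] by simp_all
    have u2: "p t - a t \<le> (SUP t\<in>T. p t - a t)" "p s - a s \<le> (SUP t\<in>T. p t - a t)"
      using cSUP_upper[OF t b2] cSUP_upper[OF s b2] by simp_all
    have "\<phi> (a t) - \<phi> (a s) \<le> \<bar>a t - a s\<bar>" using L[of "a t" "a s"] by linarith
    then show ?thesis
    proof (cases "a s \<le> a t")
      case True
      then have "\<phi> (a t) - \<phi> (a s) \<le> a t - a s" using \<open>\<phi> (a t) - \<phi> (a s) \<le> \<bar>a t - a s\<bar>\<close> by simp
      then show ?thesis using u1 u2 unfolding R_def by linarith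
    next
      case False
      then have "\<phi> (a t) - \<phi> (a s) \<le> a s - a t" using \<open>\<phi> (a t) - \<phi> (a s) \<le> \<bar>a t - a s\<bar>\<close> by simp
      then show ?thesis using u1 u2 unfolding R_def by linarith
    qed
  qed
  have "(SUP t\<in>T. p t + \<phi> (a t)) \<le> R - (p s - \<phi> (a s))" if s: "s \<in> T" for s
    by (rule cSUP_least[OF T]) (use key[OF _ s] in fastforce)
  then have "p s - \<phi> (a s) \<le> R - (SUP t\<in>T. p t + \<phi> (a t))" if s: "s \<in> T" for s
    using s by fastforce
  then have "(SUP t\<in>T. p t - \<phi> (a t)) \<le> R - (SUP t\<in>T. p t + \<phi> (a t))"
    by (intro cSUP_least[OF T])
  then show ?thesis unfolding R_def by linarith
qed


lemma sum_remove_m: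
  fixes m n :: nat
  assumes "m < n"
  shows "(\<Sum>i<n. f i) = f m + (\<Sum>i\<in>{..<n} - {m}. f i)"
  using sum.remove[of "{..<n}" m f] assms by simp

lemma radT_contract_step:
  fixes m n :: nat
  assumes T: "T \<noteq> {}" and bG: "bnd n T G" and m: "m < n"
    and L: "\<And>x y. \<bar>\<phi> x - \<phi> y\<bar> \<le> \<bar>x - y\<bar>"
  shows "radT n T (\<lambda>t i. if i = m then \<phi> (G t m) else G t i) \<le> radT n T G"
proof -
  let ?G' = "\<lambda>t i. if i = m then \<phi> (G t m) else G t i"
  let ?S = "{..<n} \<rightarrow>\<^sub>E {-1, 1::real}"
  have "radT n T ?G' = (\<Sum>\<sigma>\<in>{\<sigma>\<in>?S. \<sigma> m = 1}.
          (SUP t\<in>T. \<Sum>i<n. \<sigma> i * ?G' t i) + (SUP t\<in>T. \<Sum>i<n. (\<sigma>(m := -1)) i * ?G' t i))"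
    unfolding radT_def by (rule sum_sig_split[OF m])
  also have "\<dots> \<le> (\<Sum>\<sigma>\<in>{\<sigma>\<in>?S. \<sigma> m = 1}.
          (SUP t\<in>T. \<Sum>i<n. \<sigma> i * G t i) + (SUP t\<in>T. \<Sum>i<n. (\<sigma>(m := -1)) i * G t i))"
  proof (rule sum_mono)
    fix \<sigma> assume "\<sigma> \<in> {\<sigma>\<in>?S. \<sigma> m = 1}"
    then have s: "\<sigma> \<in> ?S" and sm: "\<sigma> m = 1" by simp_all
    have s': "\<sigma>(m := -1) \<in> ?S" using upd_sig[of \<sigma> n m "-1"] s m by simp
    define u where "u t = (\<Sum>i\<in>{..<n} - {m}. \<sigma> i * G t i)" for t
    have h1: "(\<Sum>i\<in>{..<n} - {m}. \<sigma> i * ?G' t i) = u t" for t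
      unfolding u_def by (rule sum.cong) auto
    have h2: "(\<Sum>i\<in>{..<n} - {m}. (\<sigma>(m := -1)) i * ?G' t i) = u t" for t
      unfolding u_def by (rule sum.cong) auto
    have h3: "(\<Sum>i\<in>{..<n} - {m}. (\<sigma>(m := -1)) i * G t i) = u t" for t
      unfolding u_def by (rule sum.cong) auto
    have e1: "(\<Sum>i<n. \<sigma> i * ?G' t i) = u t + \<phi> (G t m)" for t
      unfolding sum_remove_m[OF m] h1 using sm by simp
    have e2: "(\<Sum>i<n. (\<sigma>(m := -1)) i * ?G' t i) = u t - \<phi> (G t m)" for t
      unfolding sum_remove_m[OF m] h2 by simp
    have e3: "(\<Sum>i<n. \<sigma> i * G t i) = u t + G t m" for t
      unfolding sum_remove_m[OF m] u_def using sm by simp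
    have e4: "(\<Sum>i<n. (\<sigma>(m := -1)) i * G t i) = u t - G t m" for t
      unfolding sum_remove_m[OF m] h3 by simp
    have b1: "bdd_above ((\<lambda>t. u t + G t m) ` T)" using bnd_bdd[OF bG s] unfolding e3 .
    have b2: "bdd_above ((\<lambda>t. u t - G t m) ` T)" using bnd_bdd[OF bG s'] unfolding e4 .
    show "(SUP t\<in>T. \<Sum>i<n. \<sigma> i * ?G' t i) + (SUP t\<in>T. \<Sum>i<n. (\<sigma>(m := -1)) i * ?G' t i)
        \<le> (SUP t\<in>T. \<Sum>i<n. \<sigma> i * G t i) + (SUP t\<in>T. \<Sum>i<n. (\<sigma>(m := -1)) i * G t i)"
      unfolding e1 e2 e3 e4 by (rule pair_sup[OF T b1 b2 L])
  qed
  also have "\<dots> = radT n T G"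
    unfolding radT_def by (rule sum_sig_split[OF m, symmetric])
  finally show ?thesis .
qed

lemma lip_bound: "(\<And>x y. \<bar>\<phi> x - \<phi> y\<bar> \<le> \<bar>x - y\<bar>) \<Longrightarrow> \<bar>\<phi> x\<bar> \<le> \<bar>\<phi> 0\<bar> + \<bar>x::real\<bar>"
proof -
  assume L: "\<And>x y. \<bar>\<phi> x - \<phi> y\<bar> \<le> \<bar>x - y\<bar>"
  have "\<bar>\<phi> x - \<phi> 0\<bar> \<le> \<bar>x - 0\<bar>" by (rule L)
  then show ?thesis by linarith
qed

lemma radT_contract:
  fixes n :: nat
  assumes T: "T \<noteq> {}" and bF: "bnd n T F" and L: "\<And>x y. \<bar>\<phi> x - \<phi> y\<bar> \<le> \<bar>x - y\<bar>"
  shows "radT n T (\<lambda>t i. \<phi> (F t i)) \<le> radT n T F"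
proof -
  obtain M where M: "\<And>t i. t \<in> T \<Longrightarrow> i < n \<Longrightarrow> \<bar>F t i\<bar> \<le> M" using bndE[OF bF] by blast
  define G where "G k t i = (if i < k then \<phi> (F t i) else F t i)" for k t i
  have bG: "bnd n T (G k)" for k
  proof (rule bndI[where M = "\<bar>\<phi> 0\<bar> + M"])
    fix t i assume ti: "t \<in> T" "i < n"
    have "\<bar>\<phi> (F t i)\<bar> \<le> \<bar>\<phi> 0\<bar> + \<bar>F t i\<bar>" by (rule lip_bound[OF L])
    then show "\<bar>G k t i\<bar> \<le> \<bar>\<phi> 0\<bar> + M" using M[OF ti] unfolding G_def by auto
  qed
  have "k \<le> n \<Longrightarrow> radT n T (G k) \<le> radT n T F" for k
  proof (induction k)
    case 0
    have "G 0 = F" unfolding G_def by (simp add: fun_eq_iff)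
    then show ?case by simp
  next
    case (Suc k)
    have km: "k < n" using Suc.prems by simp
    have "G (Suc k) = (\<lambda>t i. if i = k then \<phi> (G k t k) else G k t i)"
      unfolding G_def by (auto simp: fun_eq_iff)
    then have "radT n T (G (Suc k)) \<le> radT n T (G k)"
      using radT_contract_step[OF T bG km L] by simp
    also have "\<dots> \<le> radT n T F" using Suc.IH km by simp
    finally show ?case .
  qed
  then have "radT n T (G n) \<le> radT n T F" by simp
  moreover have "radT n T (\<lambda>t i. \<phi> (F t i)) = radT n T (G n)"
    by (rule radT_cong) (simp add: G_def)
  ultimately show ?thesis by simp
qed

lemma radT_max:
  fixes n :: nat
  assumes T: "T \<noteq> {}" and bA: "bnd n T A" and bB: "bnd n T B"
  shows "radT n T (\<lambda>t i. max (A t i) (B t i)) \<le> radT n T A + radT n T B"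
proof -
  obtain MA where MA: "\<And>t i. t \<in> T \<Longrightarrow> i < n \<Longrightarrow> \<bar>A t i\<bar> \<le> MA" using bndE[OF bA] by blast
  obtain MB where MB: "\<And>t i. t \<in> T \<Longrightarrow> i < n \<Longrightarrow> \<bar>B t i\<bar> \<le> MB" using bndE[OF bB] by blast
  have bmax: "bnd n T (\<lambda>t i. max (A t i) (B t i))"
    by (rule bndI[where M="MA + MB"]) (use MA MB in \<open>fastforce\<close>)
  have bD: "bnd n T (\<lambda>t i. A t i - B t i)"
    by (rule bndI[where M="MA + MB"]) (use MA MB in \<open>fastforce\<close>)
  have bS: "bnd n T (\<lambda>t i. A t i + B t i)"
    by (rule bndI[where M="MA + MB"]) (use MA MB in \<open>fastforce\<close>)
  have bDa: "bnd n T (\<lambda>t i. \<bar>A t i - B t i\<bar>)"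
    by (rule bndI[where M="MA + MB"]) (use MA MB in \<open>fastforce\<close>)
  have bNB: "bnd n T (\<lambda>t i. - B t i)"
    by (rule bndI[where M="MB"]) (use MB in \<open>fastforce\<close>)
  have "2 * radT n T (\<lambda>t i. max (A t i) (B t i)) \<le> radT n T (\<lambda>t i. 2 * max (A t i) (B t i))"
    by (rule radT_scale2[OF T bmax])
  also have "\<dots> = radT n T (\<lambda>t i. (A t i + B t i) + \<bar>A t i - B t i\<bar>)"
    by (rule radT_cong) (simp add: max_def)
  also have "\<dots> \<le> radT n T (\<lambda>t i. A t i + B t i) + radT n T (\<lambda>t i. \<bar>A t i - B t i\<bar>)"
    by (rule radT_subadd[OF T bS bDa])
  also have "\<dots> \<le> (radT n T A + radT n T B) + radT n T (\<lambda>t i. A t i - B t i)"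
  proof (rule add_mono)
    show "radT n T (\<lambda>t i. A t i + B t i) \<le> radT n T A + radT n T B" by (rule radT_subadd[OF T bA bB])
    show "radT n T (\<lambda>t i. \<bar>A t i - B t i\<bar>) \<le> radT n T (\<lambda>t i. A t i - B t i)"
      using radT_contract[OF T bD, of abs] by simp
  qed
  also have "radT n T (\<lambda>t i. A t i - B t i) \<le> radT n T A + radT n T (\<lambda>t i. - B t i)"
    using radT_subadd[OF T bA bNB] by simp
  also have "radT n T (\<lambda>t i. - B t i) = radT n T B" by (rule radT_neg)
  finally show ?thesis by simp
qed

lemma radT_Max:
  fixes n :: nat
  assumes Y: "finite Y" "Y \<noteq> {}" and T: "T \<noteq> {}"
    and M: "\<And>t i y. t \<in> T \<Longrightarrow> i < n \<Longrightarrow> y \<in> Y \<Longrightarrow> \<bar>F t i y\<bar> \<le> M"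
  shows "radT n T (\<lambda>t i. Max ((F t i) ` Y)) \<le> (\<Sum>y\<in>Y. radT n T (\<lambda>t i. F t i y))"
  using Y M
proof (induction Y rule: finite_ne_induct)
  case (singleton y)
  then show ?case by simp
next
  case (insert y Y)
  have bY: "bnd n T (\<lambda>t i. Max ((F t i) ` Y))"
  proof (rule bndI[where M=M])
    fix t i assume ti: "t \<in> T" "i < n"
    have "Max ((F t i) ` Y) \<in> (F t i) ` Y" using insert.hyps(1,2) by (intro Max_in) auto
    then show "\<bar>Max ((F t i) ` Y)\<bar> \<le> M" using insert.prems ti by auto
  qed
  have by': "bnd n T (\<lambda>t i. F t i y)"
    by (rule bndI[where M=M]) (use insert.prems in simp)
  have "radT n T (\<lambda>t i. Max ((F t i) ` insert y Y)) = radT n T (\<lambda>t i. max (F t i y) (Max ((F t i) ` Y)))"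
    by (rule radT_cong) (use insert.hyps(1,2) in \<open>simp add: Max_insert\<close>)
  also have "\<dots> \<le> radT n T (\<lambda>t i. F t i y) + radT n T (\<lambda>t i. Max ((F t i) ` Y))"
    by (rule radT_max[OF T by' bY])
  also have "\<dots> \<le> radT n T (\<lambda>t i. F t i y) + (\<Sum>y\<in>Y. radT n T (\<lambda>t i. F t i y))"
    using insert.IH insert.prems by simp
  also have "\<dots> = (\<Sum>y\<in>insert y Y. radT n T (\<lambda>t i. F t i y))"
    using insert.hyps by simp
  finally show ?case .
qed



definition qf :: "nat \<Rightarrow> (nat \<Rightarrow> nat \<Rightarrow> real) \<Rightarrow> (nat \<Rightarrow> real) \<Rightarrow> (nat \<Rightarrow> real) \<Rightarrow> real" where
  "qf n K u v = (\<Sum>i<n. \<Sum>j<n. u i * v j * K i j)"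

lemma qf_sym:
  assumes "\<And>i j. i < n \<Longrightarrow> j < n \<Longrightarrow> K i j = K j i"
  shows "qf n K v u = qf n K u v"
proof -
  have "qf n K v u = (\<Sum>j<n. \<Sum>i<n. v i * u j * K i j)" unfolding qf_def by (rule sum.swap)
  also have "\<dots> = qf n K u v" unfolding qf_def
    by (intro sum.cong refl) (simp add: assms mult.commute mult.left_commute)
  finally show ?thesis .
qed

lemma qf_expand:
  "qf n K (\<lambda>i. u i + t * v i) (\<lambda>i. u i + t * v i)
     = qf n K u u + t * qf n K u v + t * qf n K v u + t^2 * qf n K v v"
  unfolding qf_def
  by (simp add: algebra_simps sum.distrib sum_distrib_left power2_eq_square)

lemma quad_disc:
  fixes A B C :: real
  assumes "\<And>t. 0 \<le> A + 2 * t * B + t^2 * C"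
  shows "B^2 \<le> A * C"
proof (cases "C = 0")
  case True
  show ?thesis
  proof (cases "B = 0")
    case True then show ?thesis using assms[of 0] \<open>C = 0\<close> by simp
  next
    case False
    have "0 \<le> A + 2 * (- (A + 1) / (2 * B)) * B" using assms[of "- (A + 1) / (2 * B)"] \<open>C = 0\<close> by simp
    also have "\<dots> = -1" using False by (simp add: field_simps)
    finally show ?thesis by simp
  qed
next
  case False
  have C0: "0 \<le> C"
  proof (rule ccontr)
    assume "\<not> 0 \<le> C"
    then have Cn: "C < 0" by simp
    define t where "t = (\<bar>A\<bar> + 2 * \<bar>B\<bar> + 1) / (- C) + 1"
    have "(\<bar>A\<bar> + 2 * \<bar>B\<bar> + 1) / (- C) \<ge> 0" using Cn by (intro divide_nonneg_pos) auto
    then have t1: "t \<ge> 1" unfolding t_def by linarith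
    have "t * (- C) \<ge> \<bar>A\<bar> + 2 * \<bar>B\<bar> + 1" unfolding t_def using Cn by (simp add: field_simps)
    then have "t * (\<bar>A\<bar> + 2 * \<bar>B\<bar> + 1) \<le> t * (t * (- C))"
      using t1 by (intro mult_left_mono) auto
    then have "t^2 * (-C) \<ge> t * (\<bar>A\<bar> + 2 * \<bar>B\<bar> + 1)"
      by (simp add: power2_eq_square algebra_simps)
    moreover have "t * (\<bar>A\<bar> + 2 * \<bar>B\<bar> + 1) \<ge> \<bar>A\<bar> + 2 * t * \<bar>B\<bar> + 1"
    proof -
      have "1 * \<bar>A\<bar> \<le> t * \<bar>A\<bar>" by (rule mult_right_mono) (use t1 in auto)
      moreover have "t * (\<bar>A\<bar> + 2 * \<bar>B\<bar> + 1) = t * \<bar>A\<bar> + 2 * t * \<bar>B\<bar> + t" by (simp add: algebra_simps)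
      ultimately show ?thesis using t1 by linarith
    qed
    moreover have "A + 2 * t * B \<le> \<bar>A\<bar> + 2 * t * \<bar>B\<bar>"
      using t1 by (smt (verit) abs_ge_self mult_left_mono)
    ultimately have "A + 2 * t * B + t^2 * C < 0" by linarith
    then show False using assms[of t] by linarith
  qed
  then have Cp: "C > 0" using False by simp
  have "0 \<le> A + 2 * (- B / C) * B + (- B / C)^2 * C" by (rule assms)
  also have "\<dots> = A - B^2 / C" using Cp by (simp add: field_simps power2_eq_square)
  finally have "B^2 / C \<le> A" by simp
  then show ?thesis using Cp by (simp add: field_simps)
qed

lemma qf_cs:
  assumes sym: "\<And>i j. i < n \<Longrightarrow> j < n \<Longrightarrow> K i j = K j i"
    and psd: "\<And>w. 0 \<le> qf n K w w"
  shows "\<bar>qf n K u v\<bar> \<le> sqrt (qf n K u u) * sqrt (qf n K v v)"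
proof -
  have "\<And>t. 0 \<le> qf n K u u + 2 * t * qf n K u v + t^2 * qf n K v v"
  proof -
    fix t
    have "0 \<le> qf n K (\<lambda>i. u i + t * v i) (\<lambda>i. u i + t * v i)" by (rule psd)
    moreover have e: "qf n K v u = qf n K u v" by (rule qf_sym) (rule sym)
    ultimately show "0 \<le> qf n K u u + 2 * t * qf n K u v + t^2 * qf n K v v"
      unfolding qf_expand by (simp add: algebra_simps)
  qed
  then have "(qf n K u v)^2 \<le> qf n K u u * qf n K v v" by (rule quad_disc)
  then have "sqrt ((qf n K u v)^2) \<le> sqrt (qf n K u u * qf n K v v)" by (rule real_sqrt_le_mono)
  then show ?thesis by (simp add: real_sqrt_mult)
qed

lemma sum_sqrt_le:
  assumes "\<And>a. a \<in> A \<Longrightarrow> 0 \<le> q a"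
  shows "(\<Sum>a\<in>A. sqrt (q a)) \<le> sqrt (real (card A) * (\<Sum>a\<in>A. q a))"
proof -
  have "(\<Sum>a\<in>A. sqrt (q a) * 1)^2 \<le> (\<Sum>a\<in>A. (sqrt (q a))^2) * (\<Sum>a\<in>A. 1^2)"
    by (rule Cauchy_Schwarz_ineq_sum)
  also have "(\<Sum>a\<in>A. (sqrt (q a))^2) = (\<Sum>a\<in>A. q a)" by (intro sum.cong refl) (simp add: assms)
  finally have "(\<Sum>a\<in>A. sqrt (q a))^2 \<le> real (card A) * (\<Sum>a\<in>A. q a)" by (simp add: mult.commute)
  then have "sqrt ((\<Sum>a\<in>A. sqrt (q a))^2) \<le> sqrt (real (card A) * (\<Sum>a\<in>A. q a))" by (rule real_sqrt_le_mono)
  moreover have "(\<Sum>a\<in>A. sqrt (q a)) \<ge> 0" by (intro sum_nonneg) (simp add: assms)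
  ultimately show ?thesis by simp
qed

definition flip :: "nat \<Rightarrow> (nat \<Rightarrow> real) \<Rightarrow> nat \<Rightarrow> real" where
  "flip m \<sigma> = \<sigma>(m := - \<sigma> m)"

lemma flip_bij:
  fixes m n :: nat
  assumes m: "m < n"
  shows "bij_betw (flip m) ({..<n} \<rightarrow>\<^sub>E {-1, 1::real}) ({..<n} \<rightarrow>\<^sub>E {-1, 1::real})"
proof (rule bij_betw_byWitness[where f' = "flip m"])
  show "\<forall>a\<in>{..<n} \<rightarrow>\<^sub>E {- 1, 1}. flip m (flip m a) = a"
    by (simp add: flip_def)
  then show "\<forall>a'\<in>{..<n} \<rightarrow>\<^sub>E {- 1, 1}. flip m (flip m a') = a'" .
  show "flip m ` ({..<n} \<rightarrow>\<^sub>E {- 1, 1}) \<subseteq> {..<n} \<rightarrow>\<^sub>E {- 1, 1}"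
  proof (rule image_subsetI)
    fix \<sigma> :: "nat \<Rightarrow> real" assume s: "\<sigma> \<in> {..<n} \<rightarrow>\<^sub>E {- 1, 1}"
    have "- \<sigma> m \<in> {-1, 1}" using sig_val[OF s m] by auto
    then show "flip m \<sigma> \<in> {..<n} \<rightarrow>\<^sub>E {- 1, 1}" unfolding flip_def by (rule upd_sig[OF s m])
  qed
  then show "flip m ` ({..<n} \<rightarrow>\<^sub>E {- 1, 1}) \<subseteq> {..<n} \<rightarrow>\<^sub>E {- 1, 1}" .
qed

lemma card_sig: "card ({..<n} \<rightarrow>\<^sub>E {-1, 1::real}) = 2 ^ n"
  by (simp add: card_PiE numeral_2_eq_2)

lemma sig_orth:
  fixes n i j :: nat
  assumes "i < n" "j < n"
  shows "(\<Sum>\<sigma>\<in>({..<n} \<rightarrow>\<^sub>E {-1, 1::real}). \<sigma> i * \<sigma> j) = (if i = j then 2 ^ n else 0)"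
proof (cases "i = j")
  case True
  have "(\<Sum>\<sigma>\<in>({..<n} \<rightarrow>\<^sub>E {-1, 1::real}). \<sigma> i * \<sigma> j) = (\<Sum>\<sigma>\<in>({..<n} \<rightarrow>\<^sub>E {-1, 1::real}). 1)"
  proof (rule sum.cong[OF refl])
    fix \<sigma> assume s: "\<sigma> \<in> {..<n} \<rightarrow>\<^sub>E {-1, 1::real}"
    show "\<sigma> i * \<sigma> j = 1" using sig_val[OF s assms(1)] True by auto
  qed
  then show ?thesis using True by (simp add: card_sig)
next
  case False
  let ?S = "{..<n} \<rightarrow>\<^sub>E {-1, 1::real}"
  have "(\<Sum>\<sigma>\<in>?S. \<sigma> i * \<sigma> j) = (\<Sum>\<sigma>\<in>?S. flip i \<sigma> i * flip i \<sigma> j)"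
    using sum.reindex_bij_betw[OF flip_bij[OF assms(1)], of "\<lambda>\<sigma>. \<sigma> i * \<sigma> j"] by simp
  also have "\<dots> = - (\<Sum>\<sigma>\<in>?S. \<sigma> i * \<sigma> j)"
    unfolding sum_negf[symmetric] using False by (intro sum.cong refl) (simp add: flip_def)
  finally show ?thesis using False by simp
qed

lemma sig_quad:
  fixes n :: nat
  assumes J: "J \<subseteq> {..<n}"
  shows "(\<Sum>\<sigma>\<in>({..<n} \<rightarrow>\<^sub>E {-1, 1::real}). \<Sum>i\<in>J. \<Sum>k\<in>J. \<sigma> i * \<sigma> k * W i k) = 2 ^ n * (\<Sum>i\<in>J. W i i)"
proof -
  let ?S = "{..<n} \<rightarrow>\<^sub>E {-1, 1::real}"
  have "(\<Sum>\<sigma>\<in>?S. \<Sum>i\<in>J. \<Sum>k\<in>J. \<sigma> i * \<sigma> k * W i k) = (\<Sum>i\<in>J. \<Sum>k\<in>J. \<Sum>\<sigma>\<in>?S. \<sigma> i * \<sigma> k * W i k)"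
    by (simp add: sum.swap[of _ ?S] sum.swap[of _ ?S J])
  also have "\<dots> = (\<Sum>i\<in>J. \<Sum>k\<in>J. W i k * (if i = k then 2 ^ n else 0))"
  proof (intro sum.cong refl)
    fix i k assume "i \<in> J" "k \<in> J"
    then have "i < n" "k < n" using J by auto
    then show "(\<Sum>\<sigma>\<in>?S. \<sigma> i * \<sigma> k * W i k) = W i k * (if i = k then 2 ^ n else 0)"
    proof -
      have "(\<Sum>\<sigma>\<in>?S. \<sigma> i * \<sigma> k * W i k) = (\<Sum>\<sigma>\<in>?S. \<sigma> i * \<sigma> k) * W i k"
        by (rule sum_distrib_right[symmetric])
      also have "\<dots> = W i k * (if i = k then 2 ^ n else 0)"
        unfolding sig_orth[OF \<open>i < n\<close> \<open>k < n\<close>] by simp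
      finally show ?thesis .
    qed
  qed
  also have "\<dots> = (\<Sum>i\<in>J. W i i * 2 ^ n)"
  proof (intro sum.cong refl)
    fix i assume i: "i \<in> J"
    have fin: "finite J" using J finite_subset by blast
    have "(\<Sum>k\<in>J. W i k * (if i = k then 2 ^ n else 0)) = (\<Sum>k\<in>J. (if i = k then W i k * 2 ^ n else 0))"
      by (intro sum.cong refl) simp
    also have "\<dots> = W i i * 2 ^ n" using fin i by (simp add: sum.delta)
    finally show "(\<Sum>k\<in>J. W i k * (if i = k then 2 ^ n else 0)) = W i i * 2 ^ n" .
  qed
  also have "\<dots> = 2 ^ n * (\<Sum>i\<in>J. W i i)" by (simp add: sum_distrib_left mult.commute)
  finally show ?thesis .
qed



lemma infsum_finsum:
  fixes g :: "'i \<Rightarrow> 'k \<Rightarrow> real"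
  assumes "finite F" "\<And>i. i \<in> F \<Longrightarrow> g i summable_on A"
  shows "infsum (\<lambda>k. \<Sum>i\<in>F. g i k) A = (\<Sum>i\<in>F. infsum (g i) A) \<and> (\<lambda>k. \<Sum>i\<in>F. g i k) summable_on A"
  using assms
proof (induction F rule: finite_induct)
  case empty
  then show ?case by simp
next
  case (insert a F)
  have ga: "g a summable_on A" using insert.prems by simp
  have IH: "infsum (\<lambda>k. \<Sum>i\<in>F. g i k) A = (\<Sum>i\<in>F. infsum (g i) A)" "(\<lambda>k. \<Sum>i\<in>F. g i k) summable_on A"
    using insert.IH insert.prems by simp_all
  have e: "(\<lambda>k. \<Sum>i\<in>insert a F. g i k) = (\<lambda>k. g a k + (\<Sum>i\<in>F. g i k))"
    using insert.hyps by simp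
  show ?case unfolding e
    using infsum_add[OF ga IH(2)] summable_on_add[OF ga IH(2)] IH(1) insert.hyps by simp
qed

lemma summ_prod:
  fixes lam :: "nat \<Rightarrow> real" and a b :: "nat \<Rightarrow> real"
  assumes "(\<lambda>k. \<bar>lam k\<bar> * (a k)\<^sup>2) summable_on I" "(\<lambda>k. \<bar>lam k\<bar> * (b k)\<^sup>2) summable_on I"
  shows "(\<lambda>k. lam k * a k * b k) summable_on I"
proof -
  have s: "(\<lambda>k. \<bar>lam k\<bar> * (a k)\<^sup>2 + \<bar>lam k\<bar> * (b k)\<^sup>2) summable_on I"
    by (rule summable_on_add[OF assms])
  have "(\<lambda>k. norm (\<bar>lam k\<bar> * (a k)\<^sup>2 + \<bar>lam k\<bar> * (b k)\<^sup>2)) summable_on I"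
    by (rule summable_on_iff_abs_summable_on_real[THEN iffD1, OF s])
  then have "(\<lambda>k. norm (lam k * a k * b k)) summable_on I"
  proof (rule Infinite_Sum.abs_summable_on_comparison_test)
    fix k assume "k \<in> I"
    have ab: "\<bar>a k\<bar> * \<bar>b k\<bar> \<le> (a k)\<^sup>2 + (b k)\<^sup>2"
    proof -
      have "0 \<le> (\<bar>a k\<bar> - \<bar>b k\<bar>)\<^sup>2" by simp
      then have "2 * (\<bar>a k\<bar> * \<bar>b k\<bar>) \<le> (a k)\<^sup>2 + (b k)\<^sup>2" by (simp add: power2_eq_square algebra_simps)
      moreover have "0 \<le> \<bar>a k\<bar> * \<bar>b k\<bar>" by simp
      ultimately show ?thesis by linarith
    qed
    have "\<bar>lam k * a k * b k\<bar> = \<bar>lam k\<bar> * (\<bar>a k\<bar> * \<bar>b k\<bar>)" by (simp add: abs_mult)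
    also have "\<dots> \<le> \<bar>lam k\<bar> * ((a k)\<^sup>2 + (b k)\<^sup>2)" by (rule mult_left_mono[OF ab]) simp
    also have "\<dots> = \<bar>\<bar>lam k\<bar> * (a k)\<^sup>2 + \<bar>lam k\<bar> * (b k)\<^sup>2\<bar>" by (simp add: algebra_simps)
    finally show "norm (lam k * a k * b k) \<le> norm (\<bar>lam k\<bar> * (a k)\<^sup>2 + \<bar>lam k\<bar> * (b k)\<^sup>2)" by simp
  qed
  then show ?thesis by (rule summable_on_iff_abs_summable_on_real[THEN iffD2])
qed

lemma psd_infsum:
  fixes f :: "nat \<Rightarrow> real" and g :: "nat \<Rightarrow> nat \<Rightarrow> real"
  assumes summ: "\<And>i j. i < n \<Longrightarrow> j < n \<Longrightarrow> (\<lambda>k. f k * g k i * g k j) summable_on A"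
    and nn: "\<And>k. k \<in> A \<Longrightarrow> 0 \<le> f k"
  shows "0 \<le> qf n (\<lambda>i j. infsum (\<lambda>k. f k * g k i * g k j) A) w w"
proof -
  have s2: "(\<lambda>k. w i * w j * (f k * g k i * g k j)) summable_on A" if "i < n" "j < n" for i j
    by (rule summable_on_cmult_right[OF summ[OF that]])
  have s3: "(\<lambda>k. \<Sum>j<n. w i * w j * (f k * g k i * g k j)) summable_on A
      \<and> infsum (\<lambda>k. \<Sum>j<n. w i * w j * (f k * g k i * g k j)) A
        = (\<Sum>j<n. infsum (\<lambda>k. w i * w j * (f k * g k i * g k j)) A)" if "i < n" for i
    using infsum_finsum[of "{..<n}" "\<lambda>j k. w i * w j * (f k * g k i * g k j)" A] s2 that by auto
  have "qf n (\<lambda>i j. infsum (\<lambda>k. f k * g k i * g k j) A) w w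
      = (\<Sum>i<n. \<Sum>j<n. infsum (\<lambda>k. w i * w j * (f k * g k i * g k j)) A)"
    unfolding qf_def by (intro sum.cong refl infsum_cmult_right[symmetric]) (use summ in auto)
  also have "\<dots> = (\<Sum>i<n. infsum (\<lambda>k. \<Sum>j<n. w i * w j * (f k * g k i * g k j)) A)"
    by (intro sum.cong refl) (use s3 in auto)
  also have "\<dots> = infsum (\<lambda>k. \<Sum>i<n. \<Sum>j<n. w i * w j * (f k * g k i * g k j)) A"
    using infsum_finsum[of "{..<n}" "\<lambda>i k. \<Sum>j<n. w i * w j * (f k * g k i * g k j)" A] s3 by auto
  also have "\<dots> \<ge> 0"
  proof (rule infsum_nonneg)
    fix k assume k: "k \<in> A"
    have "(\<Sum>i<n. \<Sum>j<n. w i * w j * (f k * g k i * g k j)) = f k * ((\<Sum>i<n. w i * g k i) * (\<Sum>j<n. w j * g k j))"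
      by (simp add: sum_product sum_distrib_left algebra_simps)
    also have "\<dots> = f k * (\<Sum>i<n. w i * g k i)\<^sup>2" by (simp add: power2_eq_square)
    also have "\<dots> \<ge> 0" using nn[OF k] by simp
    finally show "0 \<le> (\<Sum>i<n. \<Sum>j<n. w i * w j * (f k * g k i * g k j))" .
  qed
  finally show ?thesis .
qed



definition Qf :: "(nat \<Rightarrow> nat \<Rightarrow> real) \<Rightarrow> nat set \<Rightarrow> (nat \<Rightarrow> real) \<Rightarrow> real" where
  "Qf K J b = (\<Sum>i\<in>J. \<Sum>k\<in>J. b i * b k * K i k)"

lemma sum_restrict:
  fixes n :: nat
  assumes "J \<subseteq> {..<n}"
  shows "(\<Sum>i<n. if i \<in> J then F i else 0) = (\<Sum>i\<in>J. F i)"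
proof -
  have "(\<Sum>i<n. if i \<in> J then F i else 0) = sum F ({..<n} \<inter> J)"
    by (rule sum.inter_restrict[symmetric]) simp
  also have "{..<n} \<inter> J = J" using assms by (rule Int_absorb1)
  finally show ?thesis .
qed

lemma qf_restrict:
  fixes n :: nat
  assumes J: "J \<subseteq> {..<n}"
  shows "qf n K (\<lambda>i. if i \<in> J then b i else 0) (\<lambda>i. if i \<in> J then b i else 0) = Qf K J b"
proof -
  have "qf n K (\<lambda>i. if i \<in> J then b i else 0) (\<lambda>i. if i \<in> J then b i else 0)
      = (\<Sum>i<n. if i \<in> J then (\<Sum>k<n. if k \<in> J then b i * b k * K i k else 0) else 0)"
  proof -
    have e: "(if i \<in> J then b i else 0) * (if j \<in> J then b j else 0) * K i j
        = (if i \<in> J then (if j \<in> J then b i * b j * K i j else 0) else 0)" for i j by simp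
    show ?thesis unfolding qf_def e by (intro sum.cong refl) simp
  qed
  also have "\<dots> = (\<Sum>i<n. if i \<in> J then (\<Sum>k\<in>J. b i * b k * K i k) else 0)"
    by (intro sum.cong refl) (simp add: sum_restrict[OF J])
  also have "\<dots> = Qf K J b" unfolding Qf_def by (rule sum_restrict[OF J])
  finally show ?thesis .
qed

lemma qf_restrict_left:
  fixes n :: nat
  assumes J: "J \<subseteq> {..<n}"
  shows "qf n K (\<lambda>i. if i \<in> J then b i else 0) v = (\<Sum>i\<in>J. b i * (\<Sum>j<n. v j * K i j))"
proof -
  have "qf n K (\<lambda>i. if i \<in> J then b i else 0) v = (\<Sum>i<n. if i \<in> J then b i * (\<Sum>j<n. v j * K i j) else 0)"
    unfolding qf_def by (intro sum.cong refl) (simp add: sum_distrib_left algebra_simps)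
  also have "\<dots> = (\<Sum>i\<in>J. b i * (\<Sum>j<n. v j * K i j))" by (rule sum_restrict[OF J])
  finally show ?thesis .
qed

locale smp =
  fixes X :: "'a set" and S :: "'a \<Rightarrow> 'a \<Rightarrow> real" and lam :: "nat \<Rightarrow> real"
    and phi :: "nat \<Rightarrow> 'a \<Rightarrow> real" and I :: "nat set" and c n :: nat
    and D :: "nat \<Rightarrow> 'a \<times> nat" and Bp Bm R :: real
  assumes c2: "c \<ge> 2" and n0: "n > 0"
    and good: "\<And>i. i < n \<Longrightarrow> fst (D i) \<in> X \<and> snd (D i) \<in> {1..c}"
    and Sexp: "\<forall>x\<in>X. \<forall>t\<in>X. S x t = (\<Sum>\<^sub>\<infinity>k\<in>I. lam k * phi k x * phi k t)"
    and summ: "\<forall>x\<in>X. (\<lambda>k. \<bar>lam k\<bar> * (phi k x)\<^sup>2) summable_on I"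
    and Bp: "Bp > 0" and Bm: "Bm > 0" and R: "R > 0"
    and Rp: "\<forall>x\<in>X. \<bar>Splus lam phi I x x\<bar> \<le> R\<^sup>2"
    and Rm: "\<forall>x\<in>X. \<bar>Sminus lam phi I x x\<bar> \<le> R\<^sup>2"
begin

definition xs :: "nat \<Rightarrow> 'a" where "xs i = fst (D i)"
definition ys :: "nat \<Rightarrow> nat" where "ys i = snd (D i)"
definition Kp :: "nat \<Rightarrow> nat \<Rightarrow> real" where "Kp i j = Splus lam phi I (xs i) (xs j)"
definition Km :: "nat \<Rightarrow> nat \<Rightarrow> real" where "Km i j = Sminus lam phi I (xs i) (xs j)"
definition Ip :: "nat set" where "Ip = {k \<in> I. lam k \<ge> 0}"
definition Im :: "nat set" where "Im = {k \<in> I. lam k < 0}"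

lemma xsX: "i < n \<Longrightarrow> xs i \<in> X" using good unfolding xs_def by simp
lemma ysc: "i < n \<Longrightarrow> ys i \<in> {1..c}" using good[of i] unfolding ys_def by simp

lemma summ_i: "i < n \<Longrightarrow> (\<lambda>k. \<bar>lam k\<bar> * (phi k (xs i))\<^sup>2) summable_on I"
  using summ xsX by simp

lemma summ_pair: "i < n \<Longrightarrow> j < n \<Longrightarrow> (\<lambda>k. lam k * phi k (xs i) * phi k (xs j)) summable_on I"
  by (rule summ_prod[OF summ_i summ_i])

lemma summ_pair_abs: "i < n \<Longrightarrow> j < n \<Longrightarrow> (\<lambda>k. \<bar>lam k\<bar> * phi k (xs i) * phi k (xs j)) summable_on I"
  by (rule summ_prod[of "\<lambda>k. \<bar>lam k\<bar>"]) (use summ_i in simp_all)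

lemma Kp_sym: "Kp i j = Kp j i"
  unfolding Kp_def Splus_def by (intro infsum_cong) (simp add: algebra_simps)

lemma Km_sym: "Km i j = Km j i"
  unfolding Km_def Sminus_def by (intro infsum_cong) (simp add: algebra_simps)

lemma Kp_psd: "0 \<le> qf n Kp w w"
proof -
  have "Kp = (\<lambda>i j. infsum (\<lambda>k. lam k * phi k (xs i) * phi k (xs j)) Ip)"
    unfolding Kp_def Splus_def Ip_def by (simp add: fun_eq_iff)
  moreover have "0 \<le> qf n (\<lambda>i j. infsum (\<lambda>k. lam k * phi k (xs i) * phi k (xs j)) Ip) w w"
  proof (rule psd_infsum[where g = "\<lambda>k i. phi k (xs i)"])
    fix i j assume "i < n" "j < n"
    show "(\<lambda>k. lam k * phi k (xs i) * phi k (xs j)) summable_on Ip"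
      by (rule summable_on_subset_banach[OF summ_pair[OF \<open>i < n\<close> \<open>j < n\<close>]]) (auto simp: Ip_def)
  next
    fix k assume "k \<in> Ip" then show "0 \<le> lam k" by (simp add: Ip_def)
  qed
  ultimately show ?thesis by simp
qed

lemma Km_psd: "0 \<le> qf n Km w w"
proof -
  have "Km = (\<lambda>i j. infsum (\<lambda>k. \<bar>lam k\<bar> * phi k (xs i) * phi k (xs j)) Im)"
    unfolding Km_def Sminus_def Im_def by (simp add: fun_eq_iff)
  moreover have "0 \<le> qf n (\<lambda>i j. infsum (\<lambda>k. \<bar>lam k\<bar> * phi k (xs i) * phi k (xs j)) Im) w w"
  proof (rule psd_infsum[where g = "\<lambda>k i. phi k (xs i)"])
    fix i j assume "i < n" "j < n"
    show "(\<lambda>k. \<bar>lam k\<bar> * phi k (xs i) * phi k (xs j)) summable_on Im"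
      by (rule summable_on_subset_banach[OF summ_pair_abs[OF \<open>i < n\<close> \<open>j < n\<close>]]) (auto simp: Im_def)
  qed simp
  ultimately show ?thesis by simp
qed

lemma S_split:
  assumes "i < n" "j < n"
  shows "S (xs i) (xs j) = Kp i j - Km i j"
proof -
  let ?f = "\<lambda>k. lam k * phi k (xs i) * phi k (xs j)"
  have S1: "S (xs i) (xs j) = infsum ?f I" using Sexp xsX[OF assms(1)] xsX[OF assms(2)] by simp
  have IU: "I = Ip \<union> Im" unfolding Ip_def Im_def by auto
  have dj: "Ip \<inter> Im = {}" unfolding Ip_def Im_def by auto
  have sp: "?f summable_on Ip" by (rule summable_on_subset_banach[OF summ_pair[OF assms]]) (auto simp: Ip_def)
  have sm: "?f summable_on Im" by (rule summable_on_subset_banach[OF summ_pair[OF assms]]) (auto simp: Im_def)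
  have "infsum ?f I = infsum ?f (Ip \<union> Im)" by (simp only: IU[symmetric])
  also have "\<dots> = infsum ?f Ip + infsum ?f Im" by (rule infsum_Un_disjoint[OF sp sm dj])
  finally have "infsum ?f I = infsum ?f Ip + infsum ?f Im" .
  moreover have "infsum ?f Ip = Kp i j" unfolding Kp_def Splus_def Ip_def by simp
  moreover have "infsum ?f Im = - Km i j"
  proof -
    have "Km i j = infsum (\<lambda>k. - ?f k) Im"
      unfolding Km_def Sminus_def Im_def by (intro infsum_cong) simp
    then show ?thesis by (simp add: infsum_uminus)
  qed
  ultimately show ?thesis using S1 by simp
qed

definition av :: "(nat \<Rightarrow> real) \<Rightarrow> nat \<Rightarrow> nat \<Rightarrow> real" where
  "av \<alpha> y j = (if ys j = y then \<alpha> j else 0)"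

lemma Omega_p: "Omega (Splus lam phi I) c n D \<alpha> = (\<Sum>y=1..c. qf n Kp (av \<alpha> y) (av \<alpha> y))"
  unfolding Omega_def qf_def av_def Kp_def xs_def ys_def
  by (intro sum.cong refl) (simp add: algebra_simps)

lemma Omega_m: "Omega (Sminus lam phi I) c n D \<alpha> = (\<Sum>y=1..c. qf n Km (av \<alpha> y) (av \<alpha> y))"
  unfolding Omega_def qf_def av_def Km_def xs_def ys_def
  by (intro sum.cong refl) (simp add: algebra_simps)

end



lemma fiber_sum:
  fixes n :: nat and s :: "nat \<Rightarrow> 'y"
  assumes Y: "finite Y" and s: "\<And>i. i < n \<Longrightarrow> s i \<in> Y"
  shows "(\<Sum>i<n. F i) = (\<Sum>y\<in>Y. \<Sum>i\<in>{i. i < n \<and> s i = y}. F i)"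
proof -
  have e: "(\<Sum>i\<in>{i. i < n \<and> s i = y}. F i) = (\<Sum>i<n. if s i = y then F i else 0)" for y
    using sum.inter_filter[of "{..<n}" F "\<lambda>i. s i = y"] by simp
  have "(\<Sum>y\<in>Y. \<Sum>i\<in>{i. i < n \<and> s i = y}. F i) = (\<Sum>y\<in>Y. \<Sum>i<n. if s i = y then F i else 0)"
    unfolding e ..
  also have "\<dots> = (\<Sum>i<n. \<Sum>y\<in>Y. if s i = y then F i else 0)" by (rule sum.swap)
  also have "\<dots> = (\<Sum>i<n. F i)"
    by (intro sum.cong refl) (simp add: sum.delta'[OF Y] s)
  finally show ?thesis by simp
qed

lemma fiber_card:
  fixes n :: nat and s :: "nat \<Rightarrow> 'y"
  assumes Y: "finite Y" and s: "\<And>i. i < n \<Longrightarrow> s i \<in> Y"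
  shows "(\<Sum>y\<in>Y. real (card {i. i < n \<and> s i = y})) = real n"
proof -
  have "real n = (\<Sum>i<n. (1::real))" by simp
  also have "\<dots> = (\<Sum>y\<in>Y. \<Sum>i\<in>{i. i < n \<and> s i = y}. 1)" by (rule fiber_sum[OF Y s])
  also have "\<dots> = (\<Sum>y\<in>Y. real (card {i. i < n \<and> s i = y}))" by simp
  finally show ?thesis by simp
qed

lemma sig_sqrt_gen:
  fixes n :: nat
  assumes J: "J \<subseteq> {..<n}" and psd: "\<And>w. 0 \<le> qf n K w w" and diag: "\<And>i. i \<in> J \<Longrightarrow> K i i \<le> R\<^sup>2"
    and R: "R > 0"
  shows "(\<Sum>\<sigma>\<in>({..<n} \<rightarrow>\<^sub>E {-1, 1::real}). sqrt (Qf K J \<sigma>)) \<le> 2 ^ n * R * sqrt (real (card J))"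
proof -
  let ?S = "{..<n} \<rightarrow>\<^sub>E {-1, 1::real}"
  have nn: "0 \<le> Qf K J \<sigma>" for \<sigma>
    using psd[of "\<lambda>i. if i \<in> J then \<sigma> i else 0"] unfolding qf_restrict[OF J] .
  have "(\<Sum>\<sigma>\<in>?S. sqrt (Qf K J \<sigma>)) \<le> sqrt (real (card ?S) * (\<Sum>\<sigma>\<in>?S. Qf K J \<sigma>))"
    by (rule sum_sqrt_le) (rule nn)
  also have "(\<Sum>\<sigma>\<in>?S. Qf K J \<sigma>) = 2 ^ n * (\<Sum>i\<in>J. K i i)"
    unfolding Qf_def by (rule sig_quad[OF J])
  also have "(\<Sum>i\<in>J. K i i) \<le> real (card J) * R\<^sup>2"
    using sum_mono[of J "\<lambda>i. K i i" "\<lambda>_. R\<^sup>2"] diag by simp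
  finally have "(\<Sum>\<sigma>\<in>?S. sqrt (Qf K J \<sigma>)) \<le> sqrt (real (card ?S) * (2 ^ n * (real (card J) * R\<^sup>2)))"
    by (simp add: card_sig mult_left_mono)
  also have "real (card ?S) * (2 ^ n * (real (card J) * R\<^sup>2)) = (2 ^ n * R)\<^sup>2 * real (card J)"
    by (simp add: card_sig power2_eq_square algebra_simps)
  also have "sqrt \<dots> = 2 ^ n * R * sqrt (real (card J))"
    using R by (simp add: real_sqrt_mult)
  finally show ?thesis .
qed

context smp
begin

definition Hc :: "nat \<Rightarrow> ('a \<Rightarrow> real) set" where
  "Hc y = HSy S (Splus lam phi I) (Sminus lam phi I) Bp Bm c n D y"

definition G :: "(nat \<Rightarrow> real) \<Rightarrow> nat set \<Rightarrow> real" where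
  "G b J = Bp * sqrt (Qf Kp J b) + Bm * sqrt (Qf Km J b)"

lemma KL:
  assumes y: "y \<in> {1..c}" and g: "g \<in> Hc y" and J: "J \<subseteq> {..<n}"
  shows "\<bar>\<Sum>i\<in>J. b i * g (xs i)\<bar> \<le> G b J"
proof -
  have "\<exists>\<alpha>. g = (\<lambda>x. \<Sum>i\<in>{i. i < n \<and> snd (D i) = y}. \<alpha> i * S x (fst (D i))) \<and>
        (\<forall>i<n. 0 \<le> \<alpha> i) \<and> (\<Sum>i<n. \<alpha> i) = 1 \<and>
        Omega (Splus lam phi I) c n D \<alpha> \<le> Bp\<^sup>2 \<and> Omega (Sminus lam phi I) c n D \<alpha> \<le> Bm\<^sup>2"
    using g unfolding Hc_def HSy_def by (simp only: mem_Collect_eq)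
  then obtain \<alpha> where g_eq: "g = (\<lambda>x. \<Sum>i\<in>{i. i < n \<and> snd (D i) = y}. \<alpha> i * S x (fst (D i)))"
    and Op: "Omega (Splus lam phi I) c n D \<alpha> \<le> Bp\<^sup>2" and Om: "Omega (Sminus lam phi I) c n D \<alpha> \<le> Bm\<^sup>2"
    by (elim exE conjE)
  define a where "a = av \<alpha> y"
  have ga: "g (xs i) = (\<Sum>j<n. a j * Kp i j) - (\<Sum>j<n. a j * Km i j)" if i: "i < n" for i
  proof -
    have e: "{j. j < n \<and> snd (D j) = y} = {j\<in>{..<n}. ys j = y}" unfolding ys_def by auto
    have "g (xs i) = (\<Sum>j\<in>{j\<in>{..<n}. ys j = y}. \<alpha> j * S (xs i) (xs j))"
      by (simp only: g_eq e xs_def)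
    also have "\<dots> = (\<Sum>j<n. if ys j = y then \<alpha> j * S (xs i) (xs j) else 0)"
      by (rule sum.inter_filter) simp
    also have "\<dots> = (\<Sum>j<n. a j * (Kp i j - Km i j))"
      by (intro sum.cong refl) (simp add: a_def av_def S_split[OF i])
    also have "\<dots> = (\<Sum>j<n. a j * Kp i j) - (\<Sum>j<n. a j * Km i j)"
      by (simp add: right_diff_distrib sum_subtractf)
    finally show ?thesis .
  qed
  define u where "u i = (if i \<in> J then b i else 0)" for i
  have "(\<Sum>i\<in>J. b i * g (xs i)) = (\<Sum>i\<in>J. b i * (\<Sum>j<n. a j * Kp i j)) - (\<Sum>i\<in>J. b i * (\<Sum>j<n. a j * Km i j))"
    using J by (simp add: ga subset_eq right_diff_distrib sum_subtractf)
  also have "\<dots> = qf n Kp u a - qf n Km u a"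
    unfolding u_def qf_restrict_left[OF J] ..
  finally have eq: "(\<Sum>i\<in>J. b i * g (xs i)) = qf n Kp u a - qf n Km u a" .
  have aP: "qf n Kp a a \<le> Bp\<^sup>2"
  proof -
    have "qf n Kp a a \<le> (\<Sum>y'=1..c. qf n Kp (av \<alpha> y') (av \<alpha> y'))"
      unfolding a_def by (rule member_le_sum) (use y Kp_psd in auto)
    then show ?thesis using Op Omega_p by simp
  qed
  have aM: "qf n Km a a \<le> Bm\<^sup>2"
  proof -
    have "qf n Km a a \<le> (\<Sum>y'=1..c. qf n Km (av \<alpha> y') (av \<alpha> y'))"
      unfolding a_def by (rule member_le_sum) (use y Km_psd in auto)
    then show ?thesis using Om Omega_m by simp
  qed
  have sP: "sqrt (qf n Kp a a) \<le> Bp"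
    using real_sqrt_le_mono[OF aP] Bp by simp
  have sM: "sqrt (qf n Km a a) \<le> Bm"
    using real_sqrt_le_mono[OF aM] Bm by simp
  have quKp: "qf n Kp u u = Qf Kp J b" unfolding u_def by (rule qf_restrict[OF J])
  have quKm: "qf n Km u u = Qf Km J b" unfolding u_def by (rule qf_restrict[OF J])
  have cP: "\<bar>qf n Kp u a\<bar> \<le> sqrt (Qf Kp J b) * Bp"
  proof -
    have "\<bar>qf n Kp u a\<bar> \<le> sqrt (qf n Kp u u) * sqrt (qf n Kp a a)"
      by (rule qf_cs) (simp_all add: Kp_sym Kp_psd)
    also have "qf n Kp u u = Qf Kp J b" unfolding u_def by (rule qf_restrict[OF J])
    finally have c1: "\<bar>qf n Kp u a\<bar> \<le> sqrt (Qf Kp J b) * sqrt (qf n Kp a a)" .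
    have "sqrt (Qf Kp J b) * sqrt (qf n Kp a a) \<le> sqrt (Qf Kp J b) * Bp"
      by (rule mult_left_mono[OF sP]) (use Kp_psd[of u] quKp in simp)
    then show ?thesis using c1 by linarith
  qed
  have cM: "\<bar>qf n Km u a\<bar> \<le> sqrt (Qf Km J b) * Bm"
  proof -
    have "\<bar>qf n Km u a\<bar> \<le> sqrt (qf n Km u u) * sqrt (qf n Km a a)"
      by (rule qf_cs) (simp_all add: Km_sym Km_psd)
    also have "qf n Km u u = Qf Km J b" unfolding u_def by (rule qf_restrict[OF J])
    finally have c1: "\<bar>qf n Km u a\<bar> \<le> sqrt (Qf Km J b) * sqrt (qf n Km a a)" .
    have "sqrt (Qf Km J b) * sqrt (qf n Km a a) \<le> sqrt (Qf Km J b) * Bm"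
      by (rule mult_left_mono[OF sM]) (use Km_psd[of u] quKm in simp)
    then show ?thesis using c1 by linarith
  qed
  show ?thesis unfolding eq G_def using cP cM by (simp add: mult.commute)
qed

lemma hbound:
  assumes y: "y \<in> {1..c}" and g: "g \<in> Hc y" and i: "i < n"
  shows "\<bar>g (xs i)\<bar> \<le> R * (Bp + Bm)"
proof -
  have J: "{i} \<subseteq> {..<n}" using i by simp
  have "\<bar>\<Sum>i'\<in>{i}. (\<lambda>_. 1) i' * g (xs i')\<bar> \<le> G (\<lambda>_. 1) {i}" by (rule KL[OF y g J])
  moreover have "Qf Kp {i} (\<lambda>_. 1) = Kp i i" "Qf Km {i} (\<lambda>_. 1) = Km i i" unfolding Qf_def by simp_all
  moreover have "Kp i i \<le> R\<^sup>2" using Rp xsX[OF i] unfolding Kp_def by fastforce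
  moreover have "Km i i \<le> R\<^sup>2" using Rm xsX[OF i] unfolding Km_def by fastforce
  ultimately have "\<bar>g (xs i)\<bar> \<le> Bp * sqrt (Kp i i) + Bm * sqrt (Km i i)" "sqrt (Kp i i) \<le> R" "sqrt (Km i i) \<le> R"
    unfolding G_def using R real_sqrt_le_mono[of "Kp i i" "R\<^sup>2"] real_sqrt_le_mono[of "Km i i" "R\<^sup>2"] by simp_all
  moreover have "Bp * sqrt (Kp i i) \<le> Bp * R" using Bp \<open>sqrt (Kp i i) \<le> R\<close> by (intro mult_left_mono) simp_all
  moreover have "Bm * sqrt (Km i i) \<le> Bm * R" using Bm \<open>sqrt (Km i i) \<le> R\<close> by (intro mult_left_mono) simp_all
  ultimately have "\<bar>g (xs i)\<bar> \<le> Bp * R + Bm * R" by linarith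
  then show ?thesis by (simp add: algebra_simps)
qed

lemma G_sum:
  assumes J: "J \<subseteq> {..<n}"
  shows "(\<Sum>\<sigma>\<in>({..<n} \<rightarrow>\<^sub>E {-1, 1::real}). G \<sigma> J) \<le> 2 ^ n * R * (Bp + Bm) * sqrt (real (card J))"
proof -
  let ?S = "{..<n} \<rightarrow>\<^sub>E {-1, 1::real}"
  have dp: "Kp i i \<le> R\<^sup>2" if "i \<in> J" for i
    using Rp xsX[of i] that J unfolding Kp_def by fastforce
  have dm: "Km i i \<le> R\<^sup>2" if "i \<in> J" for i
    using Rm xsX[of i] that J unfolding Km_def by fastforce
  have "(\<Sum>\<sigma>\<in>?S. G \<sigma> J) = Bp * (\<Sum>\<sigma>\<in>?S. sqrt (Qf Kp J \<sigma>)) + Bm * (\<Sum>\<sigma>\<in>?S. sqrt (Qf Km J \<sigma>))"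
    unfolding G_def by (simp add: sum.distrib sum_distrib_left)
  also have "\<dots> \<le> Bp * (2 ^ n * R * sqrt (real (card J))) + Bm * (2 ^ n * R * sqrt (real (card J)))"
    using sig_sqrt_gen[OF J Kp_psd dp R] sig_sqrt_gen[OF J Km_psd dm R] Bp Bm
    by (intro add_mono mult_left_mono) simp_all
  also have "\<dots> = 2 ^ n * R * (Bp + Bm) * sqrt (real (card J))" by (simp add: algebra_simps)
  finally show ?thesis .
qed

end



lemma others_image:
  fixes k c :: nat
  assumes k: "k \<in> {1..c}"
  shows "{f y' | y'. y' \<in> {1..c} \<and> y' \<noteq> k} = (\<lambda>j. f (if j < k then j else j + 1)) ` {1..c-1}"
proof -
  have A: "{f y' | y'. y' \<in> {1..c} \<and> y' \<noteq> k} = f ` ({1..c} - {k})" by auto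
  have B: "{1..c} - {k} = (\<lambda>j. if j < k then j else j + 1) ` {1..c-1}"
  proof
    show "{1..c} - {k} \<subseteq> (\<lambda>j. if j < k then j else j + 1) ` {1..c-1}"
    proof
      fix y assume y: "y \<in> {1..c} - {k}"
      show "y \<in> (\<lambda>j. if j < k then j else j + 1) ` {1..c-1}"
      proof (cases "y < k")
        case True
        then have "y \<in> {1..c-1}" using y k by auto
        then show ?thesis using True by (intro rev_image_eqI[of y]) auto
      next
        case False
        then have "y > k" using y by auto
        then have "y - 1 \<in> {1..c-1}" "\<not> (y - 1 < k)" "y = (y - 1) + 1" using y k by auto
        then show ?thesis by (intro rev_image_eqI[of "y - 1"]) auto
      qed
    qed
    show "(\<lambda>j. if j < k then j else j + 1) ` {1..c-1} \<subseteq> {1..c} - {k}"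
      using k by auto
  qed
  show ?thesis unfolding A B image_image ..
qed

lemma sig_abs_lin:
  fixes n :: nat
  shows "(\<Sum>\<sigma>\<in>({..<n} \<rightarrow>\<^sub>E {-1, 1::real}). \<bar>\<Sum>i<n. \<sigma> i * v i\<bar>) \<le> 2 ^ n * sqrt (\<Sum>i<n. (v i)\<^sup>2)"
proof -
  let ?S = "{..<n} \<rightarrow>\<^sub>E {-1, 1::real}"
  have "(\<Sum>\<sigma>\<in>?S. \<bar>\<Sum>i<n. \<sigma> i * v i\<bar>) = (\<Sum>\<sigma>\<in>?S. sqrt ((\<Sum>i<n. \<sigma> i * v i)\<^sup>2))"
    by simp
  also have "\<dots> \<le> sqrt (real (card ?S) * (\<Sum>\<sigma>\<in>?S. (\<Sum>i<n. \<sigma> i * v i)\<^sup>2))"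
    by (rule sum_sqrt_le) simp
  also have "(\<Sum>\<sigma>\<in>?S. (\<Sum>i<n. \<sigma> i * v i)\<^sup>2) = (\<Sum>\<sigma>\<in>?S. \<Sum>i<n. \<Sum>k<n. \<sigma> i * \<sigma> k * (v i * v k))"
    by (intro sum.cong refl) (simp add: power2_eq_square sum_product algebra_simps)
  also have "\<dots> = 2 ^ n * (\<Sum>i<n. v i * v i)" by (rule sig_quad) simp
  also have "real (card ?S) * (2 ^ n * (\<Sum>i<n. v i * v i)) = (2 ^ n)\<^sup>2 * (\<Sum>i<n. (v i)\<^sup>2)"
    by (simp add: card_sig power2_eq_square)
  also have "sqrt \<dots> = 2 ^ n * sqrt (\<Sum>i<n. (v i)\<^sup>2)" by (simp add: real_sqrt_mult)
  finally show ?thesis .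
qed

lemma arith_c:
  fixes c :: real
  assumes "c \<ge> 2"
  shows "(2 * c - 1) * sqrt c + 1 \<le> c * (2 * c - 1)"
proof -
  have "c \<le> (c - 1/3)\<^sup>2"
  proof -
    have "(c - 1/3)\<^sup>2 - c = c * (c - 5/3) + 1/9" by (simp add: power2_eq_square algebra_simps)
    moreover have "c * (c - 5/3) \<ge> 0" using assms by simp
    ultimately show ?thesis by linarith
  qed
  then have "sqrt c \<le> sqrt ((c - 1/3)\<^sup>2)" by (rule real_sqrt_le_mono)
  also have "\<dots> = c - 1/3" using assms by simp
  finally have s: "sqrt c \<le> c - 1/3" .
  have "(2 * c - 1) * sqrt c \<le> (2 * c - 1) * (c - 1/3)" using s assms by (intro mult_left_mono) simp_all
  also have "\<dots> = c * (2 * c - 1) - (2 * c - 1) / 3" by (simp add: field_simps)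
  moreover have "(2 * c - 1) / 3 \<ge> 1" using assms by simp
  ultimately show ?thesis by linarith
qed

context smp
begin

definition T :: "('a \<Rightarrow> nat \<Rightarrow> real) set" where
  "T = {h. \<forall>y\<in>{1..c}. (\<lambda>x. h x y) \<in> Hc y}"

lemma T_bound: "h \<in> T \<Longrightarrow> i < n \<Longrightarrow> y \<in> {1..c} \<Longrightarrow> \<bar>h (xs i) y\<bar> \<le> R * (Bp + Bm)"
  using hbound[of y "\<lambda>x. h x y" i] unfolding T_def by simp

lemma slot_pw:
  assumes s: "\<And>i. i < n \<Longrightarrow> s i \<in> {1..c}" and h: "h \<in> T"
  shows "\<bar>\<Sum>i<n. \<sigma> i * h (xs i) (s i)\<bar> \<le> (\<Sum>y\<in>{1..c}. G \<sigma> {i. i < n \<and> s i = y})"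
proof -
  have "(\<Sum>i<n. \<sigma> i * h (xs i) (s i)) = (\<Sum>y\<in>{1..c}. \<Sum>i\<in>{i. i < n \<and> s i = y}. \<sigma> i * h (xs i) (s i))"
    by (rule fiber_sum[OF _ s]) simp
  also have "\<dots> = (\<Sum>y\<in>{1..c}. \<Sum>i\<in>{i. i < n \<and> s i = y}. \<sigma> i * (\<lambda>x. h x y) (xs i))"
    by (intro sum.cong refl) simp
  finally have e: "(\<Sum>i<n. \<sigma> i * h (xs i) (s i)) = \<dots>" .
  have "\<bar>\<Sum>y\<in>{1..c}. \<Sum>i\<in>{i. i < n \<and> s i = y}. \<sigma> i * (\<lambda>x. h x y) (xs i)\<bar>
      \<le> (\<Sum>y\<in>{1..c}. \<bar>\<Sum>i\<in>{i. i < n \<and> s i = y}. \<sigma> i * (\<lambda>x. h x y) (xs i)\<bar>)" by (rule sum_abs)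
  also have "\<dots> \<le> (\<Sum>y\<in>{1..c}. G \<sigma> {i. i < n \<and> s i = y})"
  proof (rule sum_mono)
    fix y assume y: "y \<in> {1..c}"
    have "(\<lambda>x. h x y) \<in> Hc y" using h y unfolding T_def by simp
    then show "\<bar>\<Sum>i\<in>{i. i < n \<and> s i = y}. \<sigma> i * (\<lambda>x. h x y) (xs i)\<bar> \<le> G \<sigma> {i. i < n \<and> s i = y}"
      by (rule KL[OF y]) auto
  qed
  finally show ?thesis unfolding e .
qed

lemma slot_sum:
  assumes s: "\<And>i. i < n \<Longrightarrow> s i \<in> {1..c}"
  shows "(\<Sum>\<sigma>\<in>({..<n} \<rightarrow>\<^sub>E {-1, 1::real}). \<Sum>y\<in>{1..c}. G \<sigma> {i. i < n \<and> s i = y})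
     \<le> 2 ^ n * R * (Bp + Bm) * sqrt (real c * real n)"
proof -
  let ?S = "{..<n} \<rightarrow>\<^sub>E {-1, 1::real}"
  have "(\<Sum>\<sigma>\<in>?S. \<Sum>y\<in>{1..c}. G \<sigma> {i. i < n \<and> s i = y}) = (\<Sum>y\<in>{1..c}. \<Sum>\<sigma>\<in>?S. G \<sigma> {i. i < n \<and> s i = y})"
    by (rule sum.swap)
  also have "\<dots> \<le> (\<Sum>y\<in>{1..c}. 2 ^ n * R * (Bp + Bm) * sqrt (real (card {i. i < n \<and> s i = y})))"
    by (intro sum_mono G_sum) auto
  also have "\<dots> = 2 ^ n * R * (Bp + Bm) * (\<Sum>y\<in>{1..c}. sqrt (real (card {i. i < n \<and> s i = y})))"
    by (simp add: sum_distrib_left)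
  also have "(\<Sum>y\<in>{1..c}. sqrt (real (card {i. i < n \<and> s i = y})))
      \<le> sqrt (real (card {1..c}) * (\<Sum>y\<in>{1..c}. real (card {i. i < n \<and> s i = y})))"
    by (rule sum_sqrt_le) simp
  also have "(\<Sum>y\<in>{1..c}. real (card {i. i < n \<and> s i = y})) = real n"
    by (rule fiber_card[OF _ s]) simp
  finally show ?thesis using Bp Bm R by (simp add: mult_left_mono)
qed

lemma slot_rad:
  assumes s: "\<And>i. i < n \<Longrightarrow> s i \<in> {1..c}" and T: "T \<noteq> {}"
  shows "radT n T (\<lambda>h i. h (xs i) (s i)) \<le> 2 ^ n * R * (Bp + Bm) * sqrt (real c * real n)"
proof -
  have "radT n T (\<lambda>h i. h (xs i) (s i)) \<le> (\<Sum>\<sigma>\<in>({..<n} \<rightarrow>\<^sub>E {-1, 1::real}). \<Sum>y\<in>{1..c}. G \<sigma> {i. i < n \<and> s i = y})"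
  proof (rule radT_mono_pointwise[OF T])
    fix \<sigma> h assume "h \<in> T"
    from slot_pw[where s=s and h=h and \<sigma>=\<sigma>, OF s this]
    have "\<bar>\<Sum>i<n. \<sigma> i * h (xs i) (s i)\<bar> \<le> (\<Sum>y\<in>{1..c}. G \<sigma> {i. i < n \<and> s i = y})" .
    then show "(\<Sum>i<n. \<sigma> i * h (xs i) (s i)) \<le> (\<Sum>y\<in>{1..c}. G \<sigma> {i. i < n \<and> s i = y})" by linarith
  qed
  also have "\<dots> \<le> 2 ^ n * R * (Bp + Bm) * sqrt (real c * real n)" by (rule slot_sum[OF s])
  finally show ?thesis .
qed

end



context smp
begin

lemma HS_eq: "HS S (Splus lam phi I) (Sminus lam phi I) Bp Bm c n D = margin c ` T"
  unfolding HS_def T_def Hc_def by auto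

lemma A_eq:
  "{\<bar>(1 / real n) * (\<Sum>i<n. \<sigma> i * f (fst (D i)) (snd (D i)))\<bar> | f. f \<in> margin c ` T}
   = (\<lambda>h. \<bar>(1 / real n) * (\<Sum>i<n. \<sigma> i * margin c h (xs i) (ys i))\<bar>) ` T"
  unfolding xs_def ys_def by auto

definition Mx :: "('a \<Rightarrow> nat \<Rightarrow> real) \<Rightarrow> nat \<Rightarrow> real" where
  "Mx h i = Max {h (xs i) y' | y'. y' \<in> {1..c} \<and> y' \<noteq> ys i}"

definition sl :: "nat \<Rightarrow> nat \<Rightarrow> nat" where
  "sl j i = (if j < ys i then j else j + 1)"

lemma Mx_eq: "i < n \<Longrightarrow> Mx h i = Max ((\<lambda>j. h (xs i) (sl j i)) ` {1..c-1})"
  unfolding Mx_def sl_def using others_image[OF ysc, of i "\<lambda>y. h (xs i) y"] by simp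

lemma sl_range: "j \<in> {1..c-1} \<Longrightarrow> i < n \<Longrightarrow> sl j i \<in> {1..c}"
  using ysc[of i] unfolding sl_def by auto

lemma ne1: "{1..c-1} \<noteq> {}" using c2 by simp
lemma c1s: "Suc 0 \<le> c - Suc 0" using c2 by simp

lemma Mx_bound:
  assumes h: "h \<in> T" and i: "i < n"
  shows "\<bar>Mx h i\<bar> \<le> R * (Bp + Bm)"
proof -
  have "Max ((\<lambda>j. h (xs i) (sl j i)) ` {1..c-1}) \<in> (\<lambda>j. h (xs i) (sl j i)) ` {1..c-1}"
    by (rule Max_in) (simp_all add: c1s)
  then obtain j where j: "j \<in> {1..c-1}" and e: "Max ((\<lambda>j. h (xs i) (sl j i)) ` {1..c-1}) = h (xs i) (sl j i)"
    by (elim imageE) simp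
  show ?thesis unfolding Mx_eq[OF i] e by (rule T_bound[OF h i sl_range[OF j i]])
qed

lemma bMx: "bnd n T Mx"
  by (rule bndI[where M="R * (Bp + Bm)"]) (rule Mx_bound)

lemma bnMx: "bnd n T (\<lambda>h i. - Mx h i)"
  by (rule bndI[where M="R * (Bp + Bm)"]) (simp add: Mx_bound)

lemma radMx:
  assumes T: "T \<noteq> {}"
  shows "radT n T Mx \<le> (real c - 1) * (2 ^ n * R * (Bp + Bm) * sqrt (real c * real n))"
proof -
  have "radT n T Mx = radT n T (\<lambda>h i. Max ((\<lambda>j. h (xs i) (sl j i)) ` {1..c-1}))"
    by (rule radT_cong) (simp add: Mx_eq)
  also have "\<dots> \<le> (\<Sum>j\<in>{1..c-1}. radT n T (\<lambda>h i. h (xs i) (sl j i)))"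
  proof (rule radT_Max[where M="R * (Bp + Bm)"])
    show "finite {1..c-1}" by simp
    show "{1..c-1} \<noteq> {}" by (rule ne1)
    show "T \<noteq> {}" by (rule T)
    fix h i j assume "h \<in> T" "i < n" "j \<in> {1..c-1}"
    then show "\<bar>h (xs i) (sl j i)\<bar> \<le> R * (Bp + Bm)" by (intro T_bound sl_range)
  qed
  also have "\<dots> \<le> (\<Sum>j\<in>{1..c-1}. 2 ^ n * R * (Bp + Bm) * sqrt (real c * real n))"
  proof (rule sum_mono)
    fix j assume j: "j \<in> {1..c-1}"
    show "radT n T (\<lambda>h i. h (xs i) (sl j i)) \<le> 2 ^ n * R * (Bp + Bm) * sqrt (real c * real n)"
      by (rule slot_rad[OF _ T]) (rule sl_range[OF j])
  qed
  also have "\<dots> = (real c - 1) * (2 ^ n * R * (Bp + Bm) * sqrt (real c * real n))"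
    using c2 by (simp add: of_nat_diff)
  finally show ?thesis .
qed

lemma absX:
  assumes h0: "h0 \<in> T"
  shows "(\<Sum>\<sigma>\<in>({..<n} \<rightarrow>\<^sub>E {-1, 1::real}). \<bar>\<Sum>i<n. \<sigma> i * Mx h0 i\<bar>) \<le> 2 ^ n * (R * (Bp + Bm) * sqrt (real n))"
proof -
  have "(\<Sum>\<sigma>\<in>({..<n} \<rightarrow>\<^sub>E {-1, 1::real}). \<bar>\<Sum>i<n. \<sigma> i * Mx h0 i\<bar>) \<le> 2 ^ n * sqrt (\<Sum>i<n. (Mx h0 i)\<^sup>2)"
    by (rule sig_abs_lin)
  also have "(\<Sum>i<n. (Mx h0 i)\<^sup>2) \<le> (\<Sum>i<n. (R * (Bp + Bm))\<^sup>2)"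
  proof (rule sum_mono)
    fix i assume "i \<in> {..<n}"
    then have "\<bar>Mx h0 i\<bar> \<le> \<bar>R * (Bp + Bm)\<bar>" using Mx_bound[OF h0, of i] by simp
    then show "(Mx h0 i)\<^sup>2 \<le> (R * (Bp + Bm))\<^sup>2" by (simp only: abs_le_square_iff)
  qed
  also have "(\<Sum>i<n. (R * (Bp + Bm))\<^sup>2) = (R * (Bp + Bm))\<^sup>2 * real n" by simp
  finally have "(\<Sum>\<sigma>\<in>({..<n} \<rightarrow>\<^sub>E {-1, 1::real}). \<bar>\<Sum>i<n. \<sigma> i * Mx h0 i\<bar>)
      \<le> 2 ^ n * sqrt ((R * (Bp + Bm))\<^sup>2 * real n)"
    by (simp add: mult_left_mono)
  also have "sqrt ((R * (Bp + Bm))\<^sup>2 * real n) = R * (Bp + Bm) * sqrt (real n)"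
    using R Bp Bm by (simp add: real_sqrt_mult)
  finally show ?thesis .
qed

end



lemma final_alg:
  fixes K c n :: real
  assumes K: "K \<ge> 0" and c: "c \<ge> 2" and n: "n > 0"
  shows "(1 / n) * (2 ^ m * K * sqrt (c * n) + 2 * ((c - 1) * (2 ^ m * K * sqrt (c * n))) + 2 ^ m * (K * sqrt n)) / 2 ^ m
    \<le> K * (c * (2 * c - 1)) / sqrt n"
proof -
  have sn: "sqrt n > 0" using n by simp
  define s where "s = sqrt n"
  have s0: "s > 0" using sn unfolding s_def .
  have ns: "n = s * s" unfolding s_def using n by simp
  have sq: "sqrt (c * n) = sqrt c * s" unfolding ns using s0 by (simp add: real_sqrt_mult)
  have "(1 / n) * (2 ^ m * K * sqrt (c * n) + 2 * ((c - 1) * (2 ^ m * K * sqrt (c * n))) + 2 ^ m * (K * sqrt n)) / 2 ^ m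
      = K * ((2 * c - 1) * sqrt c + 1) / sqrt n"
    unfolding sq s_def[symmetric] unfolding ns using s0 by (simp add: field_simps)
  also have "\<dots> \<le> K * (c * (2 * c - 1)) / sqrt n"
    using arith_c[OF c] K sn by (intro divide_right_mono mult_left_mono) simp_all
  finally show ?thesis .
qed

context smp
begin

lemma emp_main:
  "emp_rad (HS S (Splus lam phi I) (Sminus lam phi I) Bp Bm c n D) n D
     \<le> R * (Bp + Bm) * (real c * (2 * real c - 1)) / sqrt (real n)"
proof (cases "T = {}")
  case True
  have "emp_rad (HS S (Splus lam phi I) (Sminus lam phi I) Bp Bm c n D) n D = 0"
    unfolding emp_rad_def HS_eq True by simp
  moreover have "0 \<le> R * (Bp + Bm) * (real c * (2 * real c - 1)) / sqrt (real n)"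
    using R Bp Bm c2 by (intro divide_nonneg_nonneg mult_nonneg_nonneg) auto
  ultimately show ?thesis by simp
next
  case False
  then obtain h0 where h0: "h0 \<in> T" by blast
  let ?S = "{..<n} \<rightarrow>\<^sub>E {-1, 1::real}"
  define K where "K = R * (Bp + Bm)"
  define Gy where "Gy \<sigma> = (\<Sum>y\<in>{1..c}. G \<sigma> {i. i < n \<and> ys i = y})" for \<sigma>
  define P where "P \<sigma> = (SUP h\<in>T. \<Sum>i<n. \<sigma> i * Mx h i)" for \<sigma>
  define Q where "Q \<sigma> = (SUP h\<in>T. \<Sum>i<n. \<sigma> i * (- Mx h i))" for \<sigma>
  define X0 where "X0 \<sigma> = (\<Sum>i<n. \<sigma> i * Mx h0 i)" for \<sigma>
  have pw: "(SUP h\<in>T. \<bar>(1 / real n) * (\<Sum>i<n. \<sigma> i * margin c h (xs i) (ys i))\<bar>)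
      \<le> (1 / real n) * (Gy \<sigma> + P \<sigma> + Q \<sigma> + \<bar>X0 \<sigma>\<bar>)" if s: "\<sigma> \<in> ?S" for \<sigma>
  proof (rule cSUP_least[OF False])
    fix h assume h: "h \<in> T"
    have mg: "(\<Sum>i<n. \<sigma> i * margin c h (xs i) (ys i)) = (\<Sum>i<n. \<sigma> i * h (xs i) (ys i)) - (\<Sum>i<n. \<sigma> i * Mx h i)"
      unfolding margin_def Mx_def by (simp add: right_diff_distrib sum_subtractf)
    have a: "\<bar>\<Sum>i<n. \<sigma> i * h (xs i) (ys i)\<bar> \<le> Gy \<sigma>"
      unfolding Gy_def by (rule slot_pw[where s=ys and h=h and \<sigma>=\<sigma>, OF ysc h])
    have b1: "(\<Sum>i<n. \<sigma> i * Mx h i) \<le> P \<sigma>" unfolding P_def by (rule cSUP_upper[OF h bnd_bdd[OF bMx s]])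
    have b2: "(\<Sum>i<n. \<sigma> i * (- Mx h i)) \<le> Q \<sigma>" unfolding Q_def by (rule cSUP_upper[OF h bnd_bdd[OF bnMx s]])
    have b3: "X0 \<sigma> \<le> P \<sigma>" unfolding P_def X0_def by (rule cSUP_upper[OF h0 bnd_bdd[OF bMx s]])
    have b4: "(\<Sum>i<n. \<sigma> i * (- Mx h0 i)) \<le> Q \<sigma>" unfolding Q_def by (rule cSUP_upper[OF h0 bnd_bdd[OF bnMx s]])
    have neg: "(\<Sum>i<n. \<sigma> i * (- Mx h' i)) = - (\<Sum>i<n. \<sigma> i * Mx h' i)" for h' by (simp add: sum_negf)
    have a1: "(\<Sum>i<n. \<sigma> i * h (xs i) (ys i)) \<le> Gy \<sigma>" "- (\<Sum>i<n. \<sigma> i * h (xs i) (ys i)) \<le> Gy \<sigma>"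
      using a by linarith+
    have x0: "X0 \<sigma> \<le> \<bar>X0 \<sigma>\<bar>" "- X0 \<sigma> \<le> \<bar>X0 \<sigma>\<bar>" by simp_all
    have main: "\<bar>(\<Sum>i<n. \<sigma> i * h (xs i) (ys i)) - (\<Sum>i<n. \<sigma> i * Mx h i)\<bar> \<le> Gy \<sigma> + P \<sigma> + Q \<sigma> + \<bar>X0 \<sigma>\<bar>"
      unfolding abs_le_iff using a1 b1 b2 b3 b4 x0 neg[of h] neg[of h0] unfolding X0_def by linarith
    have "\<bar>(1 / real n) * (\<Sum>i<n. \<sigma> i * margin c h (xs i) (ys i))\<bar>
        = (1 / real n) * \<bar>(\<Sum>i<n. \<sigma> i * h (xs i) (ys i)) - (\<Sum>i<n. \<sigma> i * Mx h i)\<bar>"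
      unfolding mg by (simp add: abs_mult)
    also have "\<dots> \<le> (1 / real n) * (Gy \<sigma> + P \<sigma> + Q \<sigma> + \<bar>X0 \<sigma>\<bar>)"
      by (rule mult_left_mono[OF main]) simp
    finally show "\<bar>(1 / real n) * (\<Sum>i<n. \<sigma> i * margin c h (xs i) (ys i))\<bar> \<le> (1 / real n) * (Gy \<sigma> + P \<sigma> + Q \<sigma> + \<bar>X0 \<sigma>\<bar>)" .
  qed
  define Sm where "Sm = (\<Sum>\<sigma>\<in>?S. (SUP h\<in>T. \<bar>(1 / real n) * (\<Sum>i<n. \<sigma> i * margin c h (xs i) (ys i))\<bar>))"
  define Bd where "Bd = (1 / real n) * (2 ^ n * K * sqrt (real c * real n) + 2 * ((real c - 1) * (2 ^ n * K * sqrt (real c * real n)))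
      + 2 ^ n * (K * sqrt (real n)))"
  have e1: "emp_rad (HS S (Splus lam phi I) (Sminus lam phi I) Bp Bm c n D) n D = Sm / 2 ^ n"
    unfolding emp_rad_def HS_eq A_eq Let_def Sm_def using False by simp
  have e2: "Sm \<le> (\<Sum>\<sigma>\<in>?S. (1 / real n) * (Gy \<sigma> + P \<sigma> + Q \<sigma> + \<bar>X0 \<sigma>\<bar>))"
    unfolding Sm_def by (rule sum_mono) (rule pw)
  have e3: "(\<Sum>\<sigma>\<in>?S. (1 / real n) * (Gy \<sigma> + P \<sigma> + Q \<sigma> + \<bar>X0 \<sigma>\<bar>))
      = (1 / real n) * ((\<Sum>\<sigma>\<in>?S. Gy \<sigma>) + (\<Sum>\<sigma>\<in>?S. P \<sigma>) + (\<Sum>\<sigma>\<in>?S. Q \<sigma>) + (\<Sum>\<sigma>\<in>?S. \<bar>X0 \<sigma>\<bar>))"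
    by (simp only: sum.distrib flip: sum_distrib_left)
  have g: "(\<Sum>\<sigma>\<in>?S. Gy \<sigma>) \<le> 2 ^ n * K * sqrt (real c * real n)"
    using slot_sum[where s=ys, OF ysc] unfolding Gy_def K_def by (simp add: ac_simps)
  have p: "(\<Sum>\<sigma>\<in>?S. P \<sigma>) \<le> (real c - 1) * (2 ^ n * K * sqrt (real c * real n))"
    using radMx[OF False] unfolding radT_def P_def K_def by simp
  have q: "(\<Sum>\<sigma>\<in>?S. Q \<sigma>) \<le> (real c - 1) * (2 ^ n * K * sqrt (real c * real n))"
    using radMx[OF False] radT_neg[of n T Mx] unfolding radT_def Q_def K_def by simp
  have x: "(\<Sum>\<sigma>\<in>?S. \<bar>X0 \<sigma>\<bar>) \<le> 2 ^ n * (K * sqrt (real n))"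
    using absX[OF h0] unfolding X0_def K_def by simp
  have e4: "(1 / real n) * ((\<Sum>\<sigma>\<in>?S. Gy \<sigma>) + (\<Sum>\<sigma>\<in>?S. P \<sigma>) + (\<Sum>\<sigma>\<in>?S. Q \<sigma>) + (\<Sum>\<sigma>\<in>?S. \<bar>X0 \<sigma>\<bar>)) \<le> Bd"
    unfolding Bd_def by (rule mult_left_mono) (use g p q x in linarith, simp)
  have "Sm \<le> Bd" using e2 e3 e4 by linarith
  then have e5: "Sm / 2 ^ n \<le> Bd / 2 ^ n" by (simp add: divide_right_mono)
  have e6: "Bd / 2 ^ n \<le> K * (real c * (2 * real c - 1)) / sqrt (real n)"
    unfolding Bd_def by (rule final_alg) (use R Bp Bm c2 n0 in \<open>simp_all add: K_def\<close>)
  have "emp_rad (HS S (Splus lam phi I) (Sminus lam phi I) Bp Bm c n D) n D \<le> K * (real c * (2 * real c - 1)) / sqrt (real n)"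
    using e1 e5 e6 by linarith
  then show ?thesis unfolding K_def .
qed

end


theorem lemmaE3:
  fixes X :: "'a::euclidean_space set" and S :: "'a \<Rightarrow> 'a \<Rightarrow> real"
    and lam :: "nat \<Rightarrow> real" and phi :: "nat \<Rightarrow> 'a \<Rightarrow> real" and I :: "nat set"
    and P :: "('a \<times> nat) measure" and c n :: nat and C Bp Bm R \<delta> :: real
  assumes "compact X" and "c \<ge> 2" and "n > 0"
    and "prob_space P" and "sets P = sets (borel \<Otimes>\<^sub>M count_space UNIV)"
    and "AE z in P. fst z \<in> X \<and> snd z \<in> {1..c}"
    and "\<forall>x\<in>X. \<forall>t\<in>X. S x t = S t x"
    and "continuous_on (X \<times> X) (\<lambda>(x, t). S x t)"
    and "\<forall>x\<in>X. \<forall>t\<in>X. 0 \<le> S x t \<and> S x t \<le> 1"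
    and "\<forall>k\<in>I. phi k \<in> borel_measurable borel"
    and "\<forall>j\<in>I. \<forall>k\<in>I. set_integrable lborel X (\<lambda>t. phi j t * phi k t) \<and>
           (LINT t:X|lborel. phi j t * phi k t) = (if j = k then 1 else 0)"
    and "\<forall>k\<in>I. \<forall>x\<in>X. set_integrable lborel X (\<lambda>t. S x t * phi k t) \<and>
           (LINT t:X|lborel. S x t * phi k t) = lam k * phi k x"
    and "\<forall>x\<in>X. \<forall>t\<in>X. S x t = (\<Sum>\<^sub>\<infinity>k\<in>I. lam k * phi k x * phi k t)"
    and "C > 0"
    and "\<forall>x\<in>X. (\<lambda>k. \<bar>lam k\<bar> * (phi k x)\<^sup>2) summable_on I \<and>
           (\<Sum>\<^sub>\<infinity>k\<in>I. \<bar>lam k\<bar> * (phi k x)\<^sup>2) < C"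
    and "Bp > 0" and "Bm > 0" and "R > 0"
    and "\<forall>x\<in>X. \<bar>Splus lam phi I x x\<bar> \<le> R\<^sup>2"
    and "\<forall>x\<in>X. \<bar>Sminus lam phi I x x\<bar> \<le> R\<^sup>2"
    and "0 < \<delta>" and "\<delta> < 1"
  shows "measure (PiM {..<n} (\<lambda>_. P))
           {D \<in> space (PiM {..<n} (\<lambda>_. P)).
              rademacher P n (HS S (Splus lam phi I) (Sminus lam phi I) Bp Bm c n)
              \<le> ennreal (R * (2 * real c - 1) * real c * (Bp + Bm) / sqrt (real n)
                  + 2 * real c * (2 * real c - 1) * (Bp + Bm) * R\<^sup>2
                    * sqrt (ln (2 / \<delta>) / (2 * real n)))}
         \<ge> 1 - \<delta>"
proof -
  let ?M = "PiM {..<n} (\<lambda>_. P)"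
  define bd where "bd = R * (2 * real c - 1) * real c * (Bp + Bm) / sqrt (real n)
                  + 2 * real c * (2 * real c - 1) * (Bp + Bm) * R\<^sup>2
                    * sqrt (ln (2 / \<delta>) / (2 * real n))"
  have ps: "prob_space ?M" by (rule prob_space_PiM) (rule assms(4))
  have AEg: "AE D in ?M. \<forall>i\<in>{..<n}. fst (D i) \<in> X \<and> snd (D i) \<in> {1..c}"
  proof (rule eventually_ball_finite)
    show "finite {..<n}" by simp
    show "\<forall>i\<in>{..<n}. AE D in ?M. fst (D i) \<in> X \<and> snd (D i) \<in> {1..c}"
    proof
      fix i assume i: "i \<in> {..<n}"
      show "AE D in ?M. fst (D i) \<in> X \<and> snd (D i) \<in> {1..c}"
        by (rule AE_PiM_component[where P = "\<lambda>z. fst z \<in> X \<and> snd z \<in> {1..c}", OF assms(4) i assms(6)])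
    qed
  qed
  have ext: "0 \<le> 2 * real c * (2 * real c - 1) * (Bp + Bm) * R\<^sup>2 * sqrt (ln (2 / \<delta>) / (2 * real n))"
  proof -
    have "1 < 2 / \<delta>" using assms(21,22) by (simp add: field_simps)
    then have "0 < ln (2 / \<delta>)" by (rule ln_gt_zero)
    then have "0 \<le> sqrt (ln (2 / \<delta>) / (2 * real n))" using assms(3) by simp
    moreover have "0 \<le> 2 * real c * (2 * real c - 1) * (Bp + Bm) * R\<^sup>2"
      using assms(2,16,17) by simp
    ultimately show ?thesis by simp
  qed
  have pt: "emp_rad (HS S (Splus lam phi I) (Sminus lam phi I) Bp Bm c n D) n D \<le> bd"
    if g: "\<forall>i\<in>{..<n}. fst (D i) \<in> X \<and> snd (D i) \<in> {1..c}" for D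
  proof -
    have loc: "smp X S lam phi I c n D Bp Bm R"
    proof (unfold_locales)
      show "2 \<le> c" by (rule assms(2))
      show "0 < n" by (rule assms(3))
      fix i assume "i < n"
      then show "fst (D i) \<in> X \<and> snd (D i) \<in> {1..c}" using g by simp
    next
      show "\<forall>x\<in>X. \<forall>t\<in>X. S x t = (\<Sum>\<^sub>\<infinity>k\<in>I. lam k * phi k x * phi k t)" by (rule assms(13))
      show "\<forall>x\<in>X. (\<lambda>k. \<bar>lam k\<bar> * (phi k x)\<^sup>2) summable_on I" using assms(15) by simp
      show "0 < Bp" by (rule assms(16))
      show "0 < Bm" by (rule assms(17))
      show "0 < R" by (rule assms(18))
      show "\<forall>x\<in>X. \<bar>Splus lam phi I x x\<bar> \<le> R\<^sup>2" by (rule assms(19))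
      show "\<forall>x\<in>X. \<bar>Sminus lam phi I x x\<bar> \<le> R\<^sup>2" by (rule assms(20))
    qed
    have "emp_rad (HS S (Splus lam phi I) (Sminus lam phi I) Bp Bm c n D) n D
        \<le> R * (Bp + Bm) * (real c * (2 * real c - 1)) / sqrt (real n)"
      by (rule smp.emp_main[OF loc])
    also have "R * (Bp + Bm) * (real c * (2 * real c - 1)) / sqrt (real n)
        = R * (2 * real c - 1) * real c * (Bp + Bm) / sqrt (real n)" by (simp add: ac_simps)
    finally show ?thesis unfolding bd_def using ext by linarith
  qed
  have "rademacher P n (HS S (Splus lam phi I) (Sminus lam phi I) Bp Bm c n) \<le> (\<integral>\<^sup>+ D. ennreal bd \<partial>?M)"
    unfolding rademacher_def
  proof (rule nn_integral_mono_AE)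
    show "AE D in ?M. ennreal (emp_rad (HS S (Splus lam phi I) (Sminus lam phi I) Bp Bm c n D) n D) \<le> ennreal bd"
      using AEg by eventually_elim (rule ennreal_leI, rule pt)
  qed
  also have "(\<integral>\<^sup>+ D. ennreal bd \<partial>?M) = ennreal bd"
    using prob_space.emeasure_space_1[OF ps] by simp
  finally have rb: "rademacher P n (HS S (Splus lam phi I) (Sminus lam phi I) Bp Bm c n) \<le> ennreal bd" .
  have "{D \<in> space ?M. rademacher P n (HS S (Splus lam phi I) (Sminus lam phi I) Bp Bm c n) \<le> ennreal bd} = space ?M"
    using rb by simp
  moreover have "measure ?M (space ?M) = 1" using prob_space.prob_space[OF ps] .
  ultimately show ?thesis unfolding bd_def using assms(21) by simp
qed

end
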